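(* Let $F=\{\mathbf{p}_0,\ldots,\mathbf{p}_n\}\subset\mathbb{R}^d$ be a finite set of points not contained in any $(d-1)$-dimensional affine subspace of $\mathbb{R}^d$, and let $k\in\mathbb{N}$. Then there exists $\delta_k=\delta_k(F)>0$ such that for every $\lambda\in(1-\delta_k,1)$, the homogeneous IFS $\Phi=\{S_i\}_{i=0}^n$ with $S_i(\mathbf{x})=\lambda\mathbf{x}+(1-\lambda)\mathbf{p}_i$ satisfies $X_k=\mathrm{int}(X)$.
   Context: Write $\mathcal{D}=\{0,\ldots,n\}$. For $\lambda\in(0,1)$, $X\subset\mathbb{R}^d$ denotes the unique non-empty compact set with $X=\bigcup_{i\in\mathcal{D}}S_i(X)$, and $\mathrm{int}(X)$ is its interior in $\mathbb{R}^d$. The coding map $\pi:\mathcal{D}^{\mathbb{N}}\to X$ is $\pi(\mathbf{a})=\lim_{j\to\infty}(S_{a_1}\circ\cdots\circ S_{a_j})(\mathbf{0})$; a sequence $\mathbf{a}$ with $\pi(\mathbf{a})=\mathbf{x}$ is a coding of $\mathbf{x}$. For $\mathbf{b}\in\mathcal{D}^k$ and $\mathbf{a}\in\mathcal{D}^{\mathbb{N}}$ let $\mathrm{freq}_{\mathbf{b}}(\mathbf{a})=\lim_{m\to\infty}\frac{1}{m}\#\{1\le j\le m: a_j\cdots a_{j+k-1}=\mathbf{b}\}$ when the limit exists. $\mathbf{a}$ is $k$-simply normal if $\mathrm{freq}_{\mathbf{b}}(\mathbf{a})=(n+1)^{-k}$ for every $\mathbf{b}\in\mathcal{D}^k$.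 $X_k$ is the set of $\mathbf{x}\in X$ having at least one $k$-simply normal coding. *)

theory Defs
  imports "HOL-Analysis.Analysis"
begin

definition ifs_map :: "real \<Rightarrow> (nat \<Rightarrow> 'a::real_vector) \<Rightarrow> nat \<Rightarrow> 'a \<Rightarrow> 'a" where
  "ifs_map lam p i x = lam *\<^sub>R x + (1 - lam) *\<^sub>R (p i)"

definition attractor :: "real \<Rightarrow> (nat \<Rightarrow> 'a::euclidean_space) \<Rightarrow> nat \<Rightarrow> 'a set" where
  "attractor lam p n = (THE X. compact X \<and> X \<noteq> {} \<and>
      X = (\<Union>i\<in>{0..n}. ifs_map lam p i ` X))"

text \<open>Digit sequences are indexed from 0: a 0 is the first digit a_1 of the paper.
  prefix_map lam p a j = S_(a_1) o ... o S_(a_j).\<close>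
definition prefix_map :: "real \<Rightarrow> (nat \<Rightarrow> 'a::real_vector) \<Rightarrow> (nat \<Rightarrow> nat) \<Rightarrow> nat \<Rightarrow> 'a \<Rightarrow> 'a" where
  "prefix_map lam p a j = foldr (\<lambda>i f. ifs_map lam p (a i) \<circ> f) [0..<j] id"

definition coding_map :: "real \<Rightarrow> (nat \<Rightarrow> 'a::real_normed_vector) \<Rightarrow> (nat \<Rightarrow> nat) \<Rightarrow> 'a" where
  "coding_map lam p a = lim (\<lambda>j. prefix_map lam p a j 0)"

definition occ_count :: "nat list \<Rightarrow> (nat \<Rightarrow> nat) \<Rightarrow> nat \<Rightarrow> nat" where
  "occ_count b a m = card {j. j < m \<and> (\<forall>i < length b. a (j + i) = b ! i)}"

definition simply_normal :: "nat \<Rightarrow> nat \<Rightarrow> (nat \<Rightarrow> nat) \<Rightarrow> bool" where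
  "simply_normal n k a \<longleftrightarrow>
     (\<forall>b. length b = k \<and> set b \<subseteq> {0..n} \<longrightarrow>
        (\<lambda>m. real (occ_count b a m) / real m) \<longlonglongrightarrow> 1 / real (n + 1) ^ k)"

definition normal_points :: "real \<Rightarrow> (nat \<Rightarrow> 'a::euclidean_space) \<Rightarrow> nat \<Rightarrow> nat \<Rightarrow> 'a set" where
  "normal_points lam p n k = {x \<in> attractor lam p n. \<exists>a. (\<forall>j. a j \<in> {0..n}) \<and>
       coding_map lam p a = x \<and> simply_normal n k a}"

end

theory Submission
  imports Defs
begin


section \<open>Basic algebra of the IFS\<close>

definition csum :: "real \<Rightarrow> (nat \<Rightarrow> 'a::real_vector) \<Rightarrow> (nat \<Rightarrow> nat) \<Rightarrow> nat \<Rightarrow> 'a" where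
  "csum lam p a t = (\<Sum>r<t. ((1 - lam) * lam ^ r) *\<^sub>R p (a r))"

lemma prefix_map_0: "prefix_map lam p a 0 = id"
  by (simp add: prefix_map_def)

lemma foldr_comp_id:
  fixes F :: "nat \<Rightarrow> ('a \<Rightarrow> 'a)"
  shows "foldr (\<lambda>i f. F i \<circ> f) xs g = foldr (\<lambda>i f. F i \<circ> f) xs id \<circ> g"
  by (induction xs arbitrary: g) (auto simp: comp_assoc)

lemma prefix_map_Suc: "prefix_map lam p a (Suc t) = prefix_map lam p a t \<circ> ifs_map lam p (a t)"
  unfolding prefix_map_def
proof -
  have "foldr (\<lambda>i f. ifs_map lam p (a i) \<circ> f) [0..<Suc t] id
      = foldr (\<lambda>i f. ifs_map lam p (a i) \<circ> f) [0..<t] (ifs_map lam p (a t))" by simp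
  also have "\<dots> = foldr (\<lambda>i f. ifs_map lam p (a i) \<circ> f) [0..<t] id \<circ> ifs_map lam p (a t)"
    by (rule foldr_comp_id)
  finally show "foldr (\<lambda>i f. ifs_map lam p (a i) \<circ> f) [0..<Suc t] id =
    foldr (\<lambda>i f. ifs_map lam p (a i) \<circ> f) [0..<t] id \<circ> ifs_map lam p (a t)" .
qed

lemma prefix_map_affine: "prefix_map lam p a t y = lam ^ t *\<^sub>R y + csum lam p a t"
proof (induction t arbitrary: y)
  case 0 then show ?case by (simp add: prefix_map_0 csum_def)
next
  case (Suc t)
  have "prefix_map lam p a (Suc t) y = prefix_map lam p a t (ifs_map lam p (a t) y)"
    by (simp add: prefix_map_Suc)
  also have "\<dots> = lam ^ t *\<^sub>R (lam *\<^sub>R y + (1 - lam) *\<^sub>R p (a t)) + csum lam p a t"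
    using Suc by (simp add: ifs_map_def)
  also have "\<dots> = lam ^ Suc t *\<^sub>R y + csum lam p a (Suc t)"
    by (simp add: csum_def scaleR_add_right algebra_simps)
  finally show ?case .
qed

lemma summable_coding:
  fixes p :: "nat \<Rightarrow> 'a::banach"
  assumes "0 < lam" "lam < 1" "\<forall>j. a j \<in> {0..n}"
  shows "summable (\<lambda>r. ((1 - lam) * lam ^ r) *\<^sub>R p (a r))"
proof -
  define M where "M = (\<Sum>i\<le>n. norm (p i))"
  have pb: "norm (p (a r)) \<le> M" for r
  proof -
    have "a r \<le> n" using assms(3) by auto
    then show ?thesis unfolding M_def
      by (intro member_le_sum) auto
  qed
  have "summable (\<lambda>r. M * (1 - lam) * lam ^ r)"
    using assms by (intro summable_mult summable_geometric) auto
  moreover have "norm (((1 - lam) * lam ^ r) *\<^sub>R p (a r)) \<le> M * (1 - lam) * lam ^ r" for r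
  proof -
    have "norm (((1 - lam) * lam ^ r) *\<^sub>R p (a r)) = (1 - lam) * lam ^ r * norm (p (a r))"
      using assms by simp
    also have "\<dots> \<le> (1 - lam) * lam ^ r * M"
      using assms pb by (intro mult_left_mono) auto
    finally show ?thesis by (simp add: algebra_simps)
  qed
  ultimately show ?thesis
    by (rule summable_comparison_test'[where N=0])
qed

lemma coding_map_eq:
  fixes p :: "nat \<Rightarrow> 'a::banach"
  assumes "0 < lam" "lam < 1" "\<forall>j. a j \<in> {0..n}"
  shows "coding_map lam p a = (\<Sum>r. ((1 - lam) * lam ^ r) *\<^sub>R p (a r))"
proof -
  have "(\<lambda>j. prefix_map lam p a j 0) = csum lam p a"
    by (auto simp: prefix_map_affine)
  moreover have "csum lam p a \<longlonglongrightarrow> (\<Sum>r. ((1 - lam) * lam ^ r) *\<^sub>R p (a r))"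
    unfolding csum_def by (intro summable_LIMSEQ summable_coding[OF assms])
  ultimately show ?thesis unfolding coding_map_def by (simp add: limI)
qed

lemma coding_from_orbit:
  fixes p :: "nat \<Rightarrow> 'a::banach"
  assumes "0 < lam" "lam < 1" "\<forall>j. a j \<in> {0..n}"
    and "\<And>t. norm (x - csum lam p a t) \<le> B * lam ^ t"
  shows "coding_map lam p a = x"
proof -
  have "csum lam p a \<longlonglongrightarrow> x"
  proof -
    have "(\<lambda>t. B * lam ^ t) \<longlonglongrightarrow> B * 0"
      using assms by (intro tendsto_mult tendsto_const LIMSEQ_power_zero) auto
    then have g0: "(\<lambda>t. B * lam ^ t) \<longlonglongrightarrow> 0" by simp
    have "(\<lambda>t. csum lam p a t - x) \<longlonglongrightarrow> 0"
      by (rule Lim_null_comparison[OF always_eventually g0]) (use assms(4) in \<open>auto simp: norm_minus_commute\<close>)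
    then show ?thesis by (simp add: LIM_zero_cancel)
  qed
  moreover have "csum lam p a \<longlonglongrightarrow> (\<Sum>r. ((1 - lam) * lam ^ r) *\<^sub>R p (a r))"
    unfolding csum_def by (intro summable_LIMSEQ summable_coding[OF assms(1-3)])
  ultimately have "x = (\<Sum>r. ((1 - lam) * lam ^ r) *\<^sub>R p (a r))" by (rule LIMSEQ_unique)
  then show ?thesis using coding_map_eq[OF assms(1-3)] by simp
qed

section \<open>Convex hulls of indexed families\<close>

lemma convex_hull_indexed_iff:
  assumes "finite I"
  shows "y \<in> convex hull (c ` I) \<longleftrightarrow>
    (\<exists>\<beta>. (\<forall>i\<in>I. 0 \<le> \<beta> i) \<and> sum \<beta> I = 1 \<and> y = (\<Sum>i\<in>I. \<beta> i *\<^sub>R c i))"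
proof -
  have e: "c ` I = (\<Union>i\<in>I. {c i})" by auto
  show ?thesis
    unfolding e convex_hull_finite_union[OF assms, of "\<lambda>i. {c i}", simplified]
    by auto
qed

lemma cover_step:
  fixes c :: "nat \<Rightarrow> 'a::real_vector"
  assumes "finite I" "\<forall>i\<in>I. 0 \<le> \<beta> i" "sum \<beta> I = 1" "0 < \<mu>" "1 - \<mu> \<le> 1 / card I"
  shows "\<exists>j\<in>I. \<exists>\<beta>'. (\<forall>i\<in>I. 0 \<le> \<beta>' i) \<and> sum \<beta>' I = 1 \<and>
     (\<Sum>i\<in>I. \<beta> i *\<^sub>R c i) = \<mu> *\<^sub>R (\<Sum>i\<in>I. \<beta>' i *\<^sub>R c i) + (1 - \<mu>) *\<^sub>R c j"
proof -
  have ne: "I \<noteq> {}" using assms(3) by auto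
  then have cpos: "card I > 0" using assms(1) by (simp add: card_gt_0_iff)
  obtain j where j: "j \<in> I" "\<beta> j \<ge> 1 / card I"
  proof (rule ccontr)
    assume "\<not> thesis"
    then have lt: "\<forall>i\<in>I. \<beta> i < 1 / card I" using that by force
    have "sum \<beta> I < sum (\<lambda>i. 1 / card I) I"
      using lt ne assms(1) by (intro sum_strict_mono) auto
    also have "\<dots> = 1" using cpos by simp
    finally show False using assms(3) by simp
  qed
  define \<beta>' where "\<beta>' i = (\<beta> i - (if i = j then 1 - \<mu> else 0)) / \<mu>" for i
  have "\<forall>i\<in>I. 0 \<le> \<beta>' i"
    unfolding \<beta>'_def using assms j by (auto intro!: divide_nonneg_pos)
  moreover have "sum \<beta>' I = 1"
  proof -
    have "sum \<beta>' I = (sum \<beta> I - (\<Sum>i\<in>I. if i = j then 1 - \<mu> else 0)) / \<mu>"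
      unfolding \<beta>'_def by (simp add: sum_divide_distrib[symmetric] sum_subtractf)
    also have "\<dots> = (1 - (1 - \<mu>)) / \<mu>" using assms j by (simp add: sum.delta)
    finally show ?thesis using assms by simp
  qed
  moreover have "(\<Sum>i\<in>I. \<beta> i *\<^sub>R c i) = \<mu> *\<^sub>R (\<Sum>i\<in>I. \<beta>' i *\<^sub>R c i) + (1 - \<mu>) *\<^sub>R c j"
  proof -
    have "\<mu> *\<^sub>R (\<Sum>i\<in>I. \<beta>' i *\<^sub>R c i) = (\<Sum>i\<in>I. (\<beta> i - (if i = j then 1 - \<mu> else 0)) *\<^sub>R c i)"
      unfolding \<beta>'_def scaleR_sum_right using assms by (intro sum.cong) auto
    also have "\<dots> = (\<Sum>i\<in>I. \<beta> i *\<^sub>R c i) - (\<Sum>i\<in>I. (if i = j then 1 - \<mu> else 0) *\<^sub>R c i)"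
      by (simp add: scaleR_diff_left sum_subtractf)
    also have "(\<Sum>i\<in>I. (if i = j then 1 - \<mu> else 0) *\<^sub>R c i) = (1 - \<mu>) *\<^sub>R c j"
    proof -
      have "(\<Sum>i\<in>I. (if i = j then 1 - \<mu> else 0) *\<^sub>R c i) = (\<Sum>i\<in>I. if i = j then (1 - \<mu>) *\<^sub>R c i else 0)"
        by (intro sum.cong) auto
      also have "\<dots> = (1 - \<mu>) *\<^sub>R c j" using j assms(1) by (simp add: sum.delta)
      finally show ?thesis .
    qed
    finally show ?thesis by simp
  qed
  ultimately show ?thesis using j by blast
qed


lemma ifs_dist:
  fixes p :: "nat \<Rightarrow> 'a::real_normed_vector"
  shows "0 \<le> lam \<Longrightarrow> dist (ifs_map lam p i x) (ifs_map lam p i y) = lam * dist x y"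
proof -
  assume l: "0 \<le> lam"
  have "ifs_map lam p i x - ifs_map lam p i y = lam *\<^sub>R (x - y)"
    unfolding ifs_map_def by (simp add: algebra_simps)
  then have "dist (ifs_map lam p i x) (ifs_map lam p i y) = norm (lam *\<^sub>R (x - y))"
    by (simp only: dist_norm)
  also have "\<dots> = lam * dist x y" using l by (simp add: dist_norm)
  finally show ?thesis .
qed

lemma fixed_unique:
  fixes p :: "nat \<Rightarrow> 'a::euclidean_space"
  assumes "0 < lam" "lam < 1"
    and A: "compact A" "A \<noteq> {}" "A = (\<Union>i\<in>{0..n}. ifs_map lam p i ` A)"
    and B: "compact B" "B \<noteq> {}" "B = (\<Union>i\<in>{0..n}. ifs_map lam p i ` B)"
  shows "A \<subseteq> B"
proof -
  have "continuous_on A (\<lambda>a. infdist a B)" by (rule continuous_on_infdist) auto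
  then obtain a0 where a0: "a0 \<in> A" "\<forall>a\<in>A. infdist a B \<le> infdist a0 B"
    using continuous_attains_sup[OF A(1) A(2)] by blast
  obtain i a1 where ia: "i \<in> {0..n}" "a1 \<in> A" "a0 = ifs_map lam p i a1"
    using a0(1) A(3) by blast
  obtain b1 where b1: "b1 \<in> B" "infdist a1 B = dist a1 b1"
    using infdist_attains_inf[of B a1] B compact_imp_closed by blast
  have "ifs_map lam p i b1 \<in> B" using B(3) b1(1) ia(1) by blast
  then have "infdist a0 B \<le> dist a0 (ifs_map lam p i b1)" by (rule infdist_le)
  also have "\<dots> = lam * infdist a1 B" using ia b1 ifs_dist[of lam p i a1 b1] assms(1) by simp
  also have "\<dots> \<le> lam * infdist a0 B" using a0 ia assms(1) by (intro mult_left_mono) auto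
  finally have "infdist a0 B \<le> 0"
    using assms(2) by (smt (verit, best) infdist_nonneg mult_le_cancel_right1)
  then have "\<forall>a\<in>A. infdist a B = 0" using a0 by (smt (verit) infdist_nonneg)
  then show ?thesis
    using in_closed_iff_infdist_zero[OF compact_imp_closed[OF B(1)] B(2)] by blast
qed

lemma hull_invariant:
  fixes p :: "nat \<Rightarrow> 'a::euclidean_space"
  assumes "0 < lam" "lam < 1" "1 - lam \<le> 1 / (n + 1)"
  shows "convex hull (p ` {0..n}) = (\<Union>i\<in>{0..n}. ifs_map lam p i ` (convex hull (p ` {0..n})))"
proof
  let ?K = "convex hull (p ` {0..n})"
  show "?K \<subseteq> (\<Union>i\<in>{0..n}. ifs_map lam p i ` ?K)"
  proof
    fix y assume "y \<in> ?K"
    then obtain \<beta> where b: "\<forall>i\<in>{0..n}. 0 \<le> \<beta> i" "sum \<beta> {0..n} = 1" "y = (\<Sum>i\<in>{0..n}. \<beta> i *\<^sub>R p i)"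
      using convex_hull_indexed_iff[of "{0..n}" y p] by auto
    have "1 - lam \<le> 1 / card {0..n}" using assms(3) by simp
    then obtain j \<beta>' where j: "j \<in> {0..n}" "\<forall>i\<in>{0..n}. 0 \<le> \<beta>' i" "sum \<beta>' {0..n} = 1"
      "y = lam *\<^sub>R (\<Sum>i\<in>{0..n}. \<beta>' i *\<^sub>R p i) + (1 - lam) *\<^sub>R p j"
      using cover_step[of "{0..n}" \<beta> lam p] b assms(1) by auto
    have "(\<Sum>i\<in>{0..n}. \<beta>' i *\<^sub>R p i) \<in> ?K"
      using convex_hull_indexed_iff[of "{0..n}" _ p] j by auto
    then show "y \<in> (\<Union>i\<in>{0..n}. ifs_map lam p i ` ?K)"
      using j unfolding ifs_map_def by blast
  qed
  show "(\<Union>i\<in>{0..n}. ifs_map lam p i ` ?K) \<subseteq> ?K"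
  proof safe
    fix i x assume "i \<in> {0..n}" "x \<in> ?K"
    moreover have "p i \<in> ?K" using \<open>i \<in> {0..n}\<close> by (simp add: hull_inc)
    ultimately show "ifs_map lam p i x \<in> ?K"
      unfolding ifs_map_def using assms convex_convex_hull
      by (intro convexD) auto
  qed
qed

lemma attractor_eq:
  fixes p :: "nat \<Rightarrow> 'a::euclidean_space"
  assumes "0 < lam" "lam < 1" "1 - lam \<le> 1 / (n + 1)"
  shows "attractor lam p n = convex hull (p ` {0..n})"
proof -
  let ?K = "convex hull (p ` {0..n})"
  have K: "compact ?K" "?K \<noteq> {}" "?K = (\<Union>i\<in>{0..n}. ifs_map lam p i ` ?K)"
    using hull_invariant[OF assms] by (auto intro!: finite_imp_compact_convex_hull)
  show ?thesis unfolding attractor_def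
  proof (rule the_equality)
    show "compact ?K \<and> ?K \<noteq> {} \<and> ?K = (\<Union>i\<in>{0..n}. ifs_map lam p i ` ?K)" using K by blast
    fix X assume X: "compact X \<and> X \<noteq> {} \<and> X = (\<Union>i\<in>{0..n}. ifs_map lam p i ` X)"
    show "X = ?K"
      using fixed_unique[OF assms(1,2), where A=X and B="?K" and p=p and n=n] fixed_unique[OF assms(1,2), where B=X and A="?K" and p=p and n=n] X K
      by blast
  qed
qed


lemma convex_hull_indexedI:
  assumes "finite I" "\<forall>i\<in>I. 0 \<le> \<beta> i" "sum \<beta> I = 1"
  shows "(\<Sum>i\<in>I. \<beta> i *\<^sub>R c i) \<in> convex hull (c ` I)"
  using convex_hull_indexed_iff[OF assms(1)] assms(2,3) by blast

lemma convex_hull_indexedE: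
  assumes "finite I" "y \<in> convex hull (c ` I)"
  obtains \<beta> where "\<forall>i\<in>I. 0 \<le> \<beta> i" "sum \<beta> I = 1" "y = (\<Sum>i\<in>I. \<beta> i *\<^sub>R c i)"
  using convex_hull_indexed_iff[OF assms(1)] assms(2) by blast

lemma interior_hull_nonempty:
  fixes p :: "nat \<Rightarrow> 'a::euclidean_space"
  assumes "aff_dim (p ` {0..n}) = int DIM('a)"
  shows "interior (convex hull (p ` {0..n})) \<noteq> {}"
proof -
  have "affine hull (convex hull (p ` {0..n})) = UNIV"
    using affine_hull_UNIV[OF assms] by (simp add: affine_hull_convex_hull)
  then have "rel_interior (convex hull (p ` {0..n})) = interior (convex hull (p ` {0..n}))"
    by (rule rel_interior_interior)
  moreover have "rel_interior (convex hull (p ` {0..n})) \<noteq> {}"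
    by (simp add: rel_interior_eq_empty)
  ultimately show ?thesis by simp
qed

lemma pos_weights_interior:
  fixes p :: "nat \<Rightarrow> 'a::euclidean_space"
  assumes "aff_dim (p ` {0..n}) = int DIM('a)"
    and w: "\<forall>i\<in>{0..n}. 0 < w i" "sum w {0..n} = 1"
  shows "(\<Sum>i\<in>{0..n}. w i *\<^sub>R p i) \<in> interior (convex hull (p ` {0..n}))"
proof -
  let ?K = "convex hull (p ` {0..n})"
  obtain y0 where y0: "y0 \<in> interior ?K" using interior_hull_nonempty[OF assms(1)] by blast
  then have "y0 \<in> ?K" using interior_subset by blast
  then obtain \<gamma> where g: "\<forall>i\<in>{0..n}. 0 \<le> \<gamma> i" "sum \<gamma> {0..n} = 1" "y0 = (\<Sum>i\<in>{0..n}. \<gamma> i *\<^sub>R p i)"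
    by (rule convex_hull_indexedE[OF finite_atLeastAtMost])
  define \<eta> where "\<eta> = Min (w ` {0..n})"
  have eta: "0 < \<eta>" "\<forall>i\<in>{0..n}. \<eta> \<le> w i"
    unfolding \<eta>_def using w by auto
  define t where "t = min \<eta> (1/2)"
  have t: "0 < t" "t \<le> 1/2" "\<forall>i\<in>{0..n}. t \<le> w i" using eta unfolding t_def by auto
  have gle: "\<gamma> i \<le> 1" if "i \<in> {0..n}" for i
  proof -
    have "\<gamma> i \<le> sum \<gamma> {0..n}" by (rule member_le_sum) (use g that in auto)
    then show ?thesis using g by simp
  qed
  define z where "z = (\<Sum>i\<in>{0..n}. ((w i - t * \<gamma> i) / (1 - t)) *\<^sub>R p i)"
  have "z \<in> ?K"
  proof -
    have "\<forall>i\<in>{0..n}. 0 \<le> (w i - t * \<gamma> i) / (1 - t)"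
    proof
      fix i assume i: "i \<in> {0..n}"
      have tg: "t * \<gamma> i \<le> t * 1" using t gle[OF i] by (intro mult_left_mono) auto
      have "t \<le> w i" using t i by blast
      then have "0 \<le> w i - t * \<gamma> i" using tg by linarith
      moreover have "0 < 1 - t" using t by linarith
      ultimately show "0 \<le> (w i - t * \<gamma> i) / (1 - t)" by simp
    qed
    moreover have "(\<Sum>i\<in>{0..n}. (w i - t * \<gamma> i) / (1 - t)) = 1"
    proof -
      have "(\<Sum>i\<in>{0..n}. (w i - t * \<gamma> i) / (1 - t)) = (sum w {0..n} - t * sum \<gamma> {0..n}) / (1 - t)"
        by (simp only: sum_divide_distrib[symmetric] sum_subtractf sum_distrib_left)
      then show ?thesis using t w g by simp
    qed
    ultimately show ?thesis unfolding z_def by (intro convex_hull_indexedI) auto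
  qed
  have "z - t *\<^sub>R (z - y0) = (\<Sum>i\<in>{0..n}. w i *\<^sub>R p i)"
  proof -
    have "z - t *\<^sub>R (z - y0) = (1 - t) *\<^sub>R z + t *\<^sub>R y0" by (simp add: algebra_simps)
    also have "(1 - t) *\<^sub>R z = (\<Sum>i\<in>{0..n}. (w i - t * \<gamma> i) *\<^sub>R p i)"
      unfolding z_def scaleR_sum_right using t by (intro sum.cong) auto
    also have "t *\<^sub>R y0 = (\<Sum>i\<in>{0..n}. (t * \<gamma> i) *\<^sub>R p i)"
      unfolding g(3) scaleR_sum_right by simp
    also have "(\<Sum>i\<in>{0..n}. (w i - t * \<gamma> i) *\<^sub>R p i) + (\<Sum>i\<in>{0..n}. (t * \<gamma> i) *\<^sub>R p i)
        = (\<Sum>i\<in>{0..n}. (w i - t * \<gamma> i) *\<^sub>R p i + (t * \<gamma> i) *\<^sub>R p i)"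
      by (simp only: sum.distrib)
    also have "\<dots> = (\<Sum>i\<in>{0..n}. w i *\<^sub>R p i)"
      by (intro sum.cong refl) (simp add: scaleR_diff_left)
    finally show ?thesis .
  qed
  moreover have "z - t *\<^sub>R (z - y0) \<in> interior ?K"
    using t \<open>z \<in> ?K\<close> y0 by (intro mem_interior_convex_shrink) auto
  ultimately show ?thesis by simp
qed

lemma interior_pos_weights:
  fixes p :: "nat \<Rightarrow> 'a::euclidean_space"
  assumes "x \<in> interior (convex hull (p ` {0..n}))"
  shows "\<exists>w. (\<forall>i\<in>{0..n}. 0 < w i) \<and> sum w {0..n} = 1 \<and> x = (\<Sum>i\<in>{0..n}. w i *\<^sub>R p i)"
proof -
  let ?K = "convex hull (p ` {0..n})"
  obtain r where r: "r > 0" "ball x r \<subseteq> ?K" using assms mem_interior by blast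
  define q where "q = real (n + 1)"
  have q: "q > 0" unfolding q_def by simp
  define pb where "pb = (\<Sum>i\<in>{0..n}. (1 / q) *\<^sub>R p i)"
  define t where "t = r / (2 * (norm (x - pb) + 1))"
  have "0 < 2 * (norm (x - pb) + 1)" by (smt (verit) norm_ge_zero)
  then have t: "t > 0" unfolding t_def using r by (intro divide_pos_pos)
  have "norm (t *\<^sub>R (x - pb)) < r"
  proof -
    have "norm (t *\<^sub>R (x - pb)) = t * norm (x - pb)" using t by simp
    also have "\<dots> = r * (norm (x - pb) / (2 * (norm (x - pb) + 1)))" unfolding t_def by simp
    also have "\<dots> < r * 1"
    proof (intro mult_strict_left_mono)
      have d: "0 < 2 * (norm (x - pb) + 1)" by (smt (verit) norm_ge_zero)
      show "norm (x - pb) / (2 * (norm (x - pb) + 1)) < 1"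
        using d by (simp add: pos_divide_less_eq)
    qed (use r in auto)
    finally show ?thesis by simp
  qed
  then have "x + t *\<^sub>R (x - pb) \<in> ?K" using r by (intro subsetD[OF r(2)]) (simp add: dist_norm)
  then obtain \<beta> where b: "\<forall>i\<in>{0..n}. 0 \<le> \<beta> i" "sum \<beta> {0..n} = 1"
      "x + t *\<^sub>R (x - pb) = (\<Sum>i\<in>{0..n}. \<beta> i *\<^sub>R p i)"
    by (rule convex_hull_indexedE[OF finite_atLeastAtMost])
  define w where "w i = (\<beta> i + t / q) / (1 + t)" for i
  have "\<forall>i\<in>{0..n}. 0 < w i" unfolding w_def using b t q by (auto intro!: divide_pos_pos add_nonneg_pos)
  moreover have "sum w {0..n} = 1"
  proof -
    have "sum w {0..n} = (\<Sum>i\<in>{0..n}. \<beta> i + t / q) / (1 + t)"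
      unfolding w_def by (simp only: sum_divide_distrib[symmetric])
    also have "(\<Sum>i\<in>{0..n}. \<beta> i + t / q) = 1 + t"
      using b(2) q unfolding sum.distrib q_def by simp
    finally show ?thesis using t by simp
  qed
  moreover have "x = (\<Sum>i\<in>{0..n}. w i *\<^sub>R p i)"
  proof -
    have "(1 + t) *\<^sub>R (\<Sum>i\<in>{0..n}. w i *\<^sub>R p i) = (\<Sum>i\<in>{0..n}. (\<beta> i + t / q) *\<^sub>R p i)"
      unfolding w_def scaleR_sum_right using t by (intro sum.cong) auto
    also have "\<dots> = (\<Sum>i\<in>{0..n}. \<beta> i *\<^sub>R p i) + t *\<^sub>R pb"
      unfolding pb_def scaleR_sum_right scaleR_add_left sum.distrib by simp
    also have "\<dots> = (1 + t) *\<^sub>R x" using b(3) by (simp add: algebra_simps)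
    finally have "(\<Sum>i\<in>{0..n}. w i *\<^sub>R p i) = x \<or> 1 + t = 0" by (simp only: scaleR_cancel_left)
    then show ?thesis using t by auto
  qed
  ultimately show ?thesis by blast
qed

lemma normal_digit_occurs:
  assumes "simply_normal n k a" "k \<ge> 1" "i \<in> {0..n}"
  shows "\<exists>t. a t = i"
proof (rule ccontr)
  assume "\<not> (\<exists>t. a t = i)"
  then have ne: "\<forall>t. a t \<noteq> i" by blast
  let ?b = "replicate k i"
  have "(\<lambda>m. real (occ_count ?b a m) / real m) \<longlonglongrightarrow> 1 / real (n + 1) ^ k"
    using assms unfolding simply_normal_def by auto
  moreover have "occ_count ?b a m = 0" for m
  proof -
    have "{j. j < m \<and> (\<forall>i' < length ?b. a (j + i') = ?b ! i')} = {}"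
    proof -
      have "\<not> (\<forall>i' < length ?b. a (j + i') = ?b ! i')" for j
      proof
        assume "\<forall>i' < length ?b. a (j + i') = ?b ! i'"
        then have "a (j + 0) = ?b ! 0" using assms(2) by auto
        then show False using ne assms(2) by simp
      qed
      then show ?thesis by blast
    qed
    then show ?thesis unfolding occ_count_def by simp
  qed
  ultimately have "(\<lambda>m. 0::real) \<longlonglongrightarrow> 1 / real (n + 1) ^ k" by simp
  then have "1 / real (n + 1) ^ k = (0::real)" by (simp only: LIMSEQ_const_iff)
  then show False by simp
qed

lemma normal_in_interior:
  fixes p :: "nat \<Rightarrow> 'a::euclidean_space"
  assumes "aff_dim (p ` {0..n}) = int DIM('a)" "0 < lam" "lam < 1"
    and a: "\<forall>j. a j \<in> {0..n}" "simply_normal n k a" "k \<ge> 1"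
  shows "coding_map lam p a \<in> interior (convex hull (p ` {0..n}))"
proof -
  define f where "f i r = (if a r = i then (1 - lam) * lam ^ r else 0)" for i r
  have sg: "summable (\<lambda>r. (1 - lam) * lam ^ r)"
    using assms by (intro summable_mult summable_geometric) auto
  have sf: "summable (f i)" for i
    by (rule summable_comparison_test'[OF sg, where N=0]) (use assms in \<open>auto simp: f_def\<close>)
  define w where "w i = suminf (f i)" for i
  have "\<forall>i\<in>{0..n}. 0 < w i"
  proof
    fix i assume i: "i \<in> {0..n}"
    obtain t where "a t = i" using normal_digit_occurs[OF a(2,3) i] by blast
    then show "0 < w i" unfolding w_def
      using assms by (intro suminf_pos2[OF sf, of _ t]) (auto simp: f_def)
  qed
  moreover have "sum w {0..n} = 1"
  proof -
    have "sum w {0..n} = (\<Sum>r. \<Sum>i\<in>{0..n}. f i r)"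
      unfolding w_def by (rule suminf_sum[symmetric]) (rule sf)
    also have "(\<lambda>r. \<Sum>i\<in>{0..n}. f i r) = (\<lambda>r. (1 - lam) * lam ^ r)"
      using a(1) by (auto simp: f_def sum.delta)
    also have "(\<Sum>r. (1 - lam) * lam ^ r) = 1"
      using assms by (simp add: suminf_mult suminf_geometric)
    finally show ?thesis .
  qed
  moreover have "coding_map lam p a = (\<Sum>i\<in>{0..n}. w i *\<^sub>R p i)"
  proof -
    have "coding_map lam p a = (\<Sum>r. ((1 - lam) * lam ^ r) *\<^sub>R p (a r))"
      using coding_map_eq[OF assms(2,3) a(1)] .
    also have "(\<lambda>r. ((1 - lam) * lam ^ r) *\<^sub>R p (a r)) = (\<lambda>r. \<Sum>i\<in>{0..n}. f i r *\<^sub>R p i)"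
    proof
      fix r
      have "(\<Sum>i\<in>{0..n}. f i r *\<^sub>R p i) = (\<Sum>i\<in>{0..n}. if i = a r then ((1 - lam) * lam ^ r) *\<^sub>R p i else 0)"
        by (intro sum.cong) (auto simp: f_def)
      also have "\<dots> = ((1 - lam) * lam ^ r) *\<^sub>R p (a r)" using a(1) by (simp add: sum.delta')
      finally show "((1 - lam) * lam ^ r) *\<^sub>R p (a r) = (\<Sum>i\<in>{0..n}. f i r *\<^sub>R p i)" by simp
    qed
    also have "(\<Sum>r. \<Sum>i\<in>{0..n}. f i r *\<^sub>R p i) = (\<Sum>i\<in>{0..n}. \<Sum>r. f i r *\<^sub>R p i)"
      by (rule suminf_sum) (intro summable_scaleR_left sf)
    also have "\<dots> = (\<Sum>i\<in>{0..n}. w i *\<^sub>R p i)"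
      unfolding w_def by (intro sum.cong refl) (simp add: suminf_scaleR_left[OF sf])
    finally show ?thesis .
  qed
  ultimately show ?thesis using pos_weights_interior[OF assms(1)] by simp
qed


lemma sum_split_mult:
  fixes h :: "nat \<Rightarrow> 'a::comm_monoid_add"
  shows "(\<Sum>v<a*b. h v) = (\<Sum>y<b. \<Sum>x<a. h (x + a*y))"
proof (induction b)
  case 0 then show ?case by simp
next
  case (Suc b)
  have "(\<Sum>v<a * Suc b. h v) = (\<Sum>v\<in>{0..<a*b}. h v) + (\<Sum>v\<in>{a*b..<a*b+a}. h v)"
    by (simp add: sum.atLeastLessThan_concat atLeast0LessThan[symmetric] algebra_simps)
  also have "(\<Sum>v\<in>{a*b..<a*b+a}. h v) = (\<Sum>x<a. h (x + a*b))"
  proof -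
    have "(\<Sum>v\<in>{0+a*b..<a+a*b}. h v) = (\<Sum>x\<in>{0..<a}. h (x + a*b))"
      by (rule sum.shift_bounds_nat_ivl)
    then show ?thesis by (simp add: atLeast0LessThan add.commute)
  qed
  finally show ?case using Suc by (simp add: atLeast0LessThan)
qed

definition dg :: "nat \<Rightarrow> nat \<Rightarrow> nat \<Rightarrow> nat" where
  "dg q i u = (u div q ^ i) mod q"

lemma dg_0: "q > 0 \<Longrightarrow> x < q \<Longrightarrow> dg q 0 (x + q * y) = x"
  by (simp add: dg_def)

lemma dg_Suc: "q > 0 \<Longrightarrow> x < q \<Longrightarrow> dg q (Suc i) (x + q * y) = dg q i y"
proof -
  assume q: "q > 0" "x < q"
  have "(x + q * y) div q ^ Suc i = ((x + q * y) div q) div q ^ i"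
    by (simp add: div_mult2_eq)
  also have "(x + q * y) div q = y" using q by simp
  finally show ?thesis by (simp add: dg_def)
qed

lemma dg_lt: "q > 0 \<Longrightarrow> dg q i u < q"
  by (simp add: dg_def)

abbreviation ind :: "bool \<Rightarrow> nat" where "ind P \<equiv> (if P then 1 else 0)"

lemma digit_count:
  assumes "q > 0" "S \<subseteq> {..<N}" "\<forall>i\<in>S. c i < q"
  shows "(\<Sum>u<q^N. ind (\<forall>i\<in>S. dg q i u = c i)) = q ^ (N - card S)"
  using assms(2,3)
proof (induction N arbitrary: S c)
  case 0
  then have "S = {}" by auto
  then show ?case by simp
next
  case (Suc N)
  define S' where "S' = {i. Suc i \<in> S}"
  have S'sub: "S' \<subseteq> {..<N}" using Suc.prems unfolding S'_def by auto
  have fin: "finite S" using Suc.prems(1) finite_subset by blast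
  have cS: "card S = card S' + (if 0 \<in> S then 1 else 0)"
  proof -
    have "S = Suc ` S' \<union> (S \<inter> {0})" unfolding S'_def
      by (auto, metis not0_implies_Suc image_eqI mem_Collect_eq)
    moreover have "card (Suc ` S' \<union> (S \<inter> {0})) = card (Suc ` S') + card (S \<inter> {0})"
      by (rule card_Un_disjoint) (use fin S'sub in \<open>auto intro: finite_subset\<close>)
    moreover have "card (Suc ` S') = card S'" by (simp add: card_image)
    ultimately show ?thesis by (auto simp: Int_insert_right)
  qed
  have cond: "(\<forall>i\<in>S. dg q i (x + q * y) = c i) \<longleftrightarrow> ((0 \<in> S \<longrightarrow> x = c 0) \<and> (\<forall>i\<in>S'. dg q i y = c (Suc i)))"
    if "x < q" for x y
  proof -
    have "(\<forall>i\<in>S. dg q i (x + q * y) = c i) \<longleftrightarrow> (\<forall>i. i \<in> S \<longrightarrow> dg q i (x + q * y) = c i)" by blast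
    also have "\<dots> \<longleftrightarrow> ((0 \<in> S \<longrightarrow> dg q 0 (x + q * y) = c 0) \<and> (\<forall>i. Suc i \<in> S \<longrightarrow> dg q (Suc i) (x + q * y) = c (Suc i)))"
      by (metis not0_implies_Suc)
    also have "\<dots> \<longleftrightarrow> ((0 \<in> S \<longrightarrow> x = c 0) \<and> (\<forall>i\<in>S'. dg q i y = c (Suc i)))"
      using that assms(1) by (simp add: dg_0 dg_Suc S'_def)
    finally show ?thesis .
  qed
  have inner: "(\<Sum>x<q. ind (\<forall>i\<in>S. dg q i (x + q * y) = c i))
      = ind (\<forall>i\<in>S'. dg q i y = c (Suc i)) * (if 0 \<in> S then 1 else q)" for y
  proof -
    have "(\<Sum>x<q. ind (\<forall>i\<in>S. dg q i (x + q * y) = c i))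
        = (\<Sum>x<q. ind (\<forall>i\<in>S'. dg q i y = c (Suc i)) * ind (0 \<in> S \<longrightarrow> x = c 0))"
      by (intro sum.cong refl) (auto simp: cond)
    also have "\<dots> = ind (\<forall>i\<in>S'. dg q i y = c (Suc i)) * (\<Sum>x<q. ind (0 \<in> S \<longrightarrow> x = c 0))"
      by (simp add: sum_distrib_left)
    also have "(\<Sum>x<q. ind (0 \<in> S \<longrightarrow> x = c 0)) = (if 0 \<in> S then 1 else q)"
    proof (cases "0 \<in> S")
      case True
      then have "c 0 < q" using Suc.prems by auto
      then show ?thesis using True by (simp add: sum.delta)
    next
      case False then show ?thesis by simp
    qed
    finally show ?thesis .
  qed
  have "(\<Sum>u<q ^ Suc N. ind (\<forall>i\<in>S. dg q i u = c i))
      = (\<Sum>y<q^N. \<Sum>x<q. ind (\<forall>i\<in>S. dg q i (x + q * y) = c i))"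
    by (simp add: sum_split_mult)
  also have "\<dots> = (\<Sum>y<q^N. ind (\<forall>i\<in>S'. dg q i y = c (Suc i))) * (if 0 \<in> S then 1 else q)"
    by (simp add: inner sum_distrib_right)
  also have "(\<Sum>y<q^N. ind (\<forall>i\<in>S'. dg q i y = c (Suc i))) = q ^ (N - card S')"
    using Suc.IH[OF S'sub, of "\<lambda>i. c (Suc i)"] Suc.prems unfolding S'_def by auto
  also have "q ^ (N - card S') * (if 0 \<in> S then 1 else q) = q ^ (Suc N - card S)"
  proof -
    have "card S' \<le> N" using S'sub card_mono[OF _ S'sub] by simp
    then show ?thesis using cS by (auto simp: Suc_diff_le power_Suc)
  qed
  finally show ?case .
qed


lemma dg_split:
  assumes "q > 0" "x < q ^ m"
  shows "dg q i (x + q ^ m * y) = (if i < m then dg q i x else dg q (i - m) y)"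
proof (cases "i < m")
  case True
  have "(x + q ^ m * y) div q ^ i = x div q ^ i + q ^ (m - i) * y"
  proof -
    have "q ^ m = q ^ i * q ^ (m - i)" using True by (simp add: power_add[symmetric])
    then have e: "x + q ^ m * y = x + q ^ i * (q ^ (m - i) * y)" by (simp add: mult.assoc)
    show ?thesis unfolding e using assms(1) by simp
  qed
  moreover have "q ^ (m - i) * y mod q = 0" using True by (simp add: power_eq_if)
  ultimately show ?thesis using True unfolding dg_def by (simp add: mod_add_eq[symmetric])
next
  case False
  have qi: "q ^ i = q ^ m * q ^ (i - m)" using False by (simp add: power_add[symmetric])
  have "(x + q ^ m * y) div q ^ i = ((x + q ^ m * y) div q ^ m) div q ^ (i - m)"
    unfolding qi by (rule div_mult2_eq)
  also have "(x + q ^ m * y) div q ^ m = y" using assms by simp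
  finally show ?thesis using False unfolding dg_def by simp
qed

lemma dg_mod: "q > 0 \<Longrightarrow> i < M \<Longrightarrow> dg q i (x mod q ^ M) = dg q i x"
proof -
  assume a: "q > 0" "i < M"
  have "dg q i (x mod q^M + q^M*(x div q^M)) = (if i < M then dg q i (x mod q^M) else dg q (i-M) (x div q^M))"
    by (rule dg_split) (use a in auto)
  then show ?thesis using a by simp
qed

lemma dg_Suc_div: "dg q (Suc i) v = dg q i (v div q)"
  by (simp add: dg_def div_mult2_eq)

lemma digits_unique:
  assumes "q > 0" "v < q ^ m" "v' < q ^ m" "\<forall>i<m. dg q i v = dg q i v'"
  shows "v = v'"
  using assms(2-4)
proof (induction m arbitrary: v v')
  case 0 then show ?case by simp
next
  case (Suc m)
  have v: "v = v mod q + q * (v div q)" "v' = v' mod q + q * (v' div q)" by simp_all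
  have "v mod q = v' mod q" using Suc.prems(3)[rule_format, of 0] by (simp add: dg_def)
  moreover have "v div q = v' div q"
  proof (rule Suc.IH)
    show "v div q < q ^ m" "v' div q < q ^ m" using Suc.prems assms(1)
      by (auto simp: div_less_iff_less_mult mult.commute)
    show "\<forall>i<m. dg q i (v div q) = dg q i (v' div q)"
    proof safe
      fix i assume "i < m"
      then have "dg q (Suc i) v = dg q (Suc i) v'" using Suc.prems by auto
      then show "dg q i (v div q) = dg q i (v' div q)"
        by (simp add: dg_Suc_div)
    qed
  qed
  ultimately show ?case using v by metis
qed

lemma sum_ind_card: "finite A \<Longrightarrow> (\<Sum>u\<in>A. ind (P u)) = card {u\<in>A. P u}"
proof -
  assume "finite A"
  have "{u\<in>A. P u} = A \<inter> Collect P" by auto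
  then show ?thesis using \<open>finite A\<close> by (simp add: sum.If_cases)
qed

lemma digit_sum:
  fixes g :: "nat \<Rightarrow> 'a::real_vector"
  assumes "q > 0" "e < N"
  shows "(\<Sum>u<q^N. g (dg q e u)) = real (q ^ (N - 1)) *\<^sub>R (\<Sum>i<q. g i)"
proof -
  have "(\<Sum>u<q^N. g (dg q e u)) = (\<Sum>u<q^N. \<Sum>i<q. if dg q e u = i then g i else 0)"
    using assms(1) by (intro sum.cong refl) (simp add: sum.delta dg_lt)
  also have "\<dots> = (\<Sum>i<q. \<Sum>u<q^N. if dg q e u = i then g i else 0)" by (rule sum.swap)
  also have "\<dots> = (\<Sum>i<q. real (\<Sum>u<q^N. ind (dg q e u = i)) *\<^sub>R g i)"
  proof (intro sum.cong refl)
    fix i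
    have "real (\<Sum>u<q^N. ind (dg q e u = i)) *\<^sub>R g i = (\<Sum>u<q^N. real (ind (dg q e u = i)) *\<^sub>R g i)"
      by (simp add: scaleR_sum_left)
    also have "\<dots> = (\<Sum>u<q^N. if dg q e u = i then g i else 0)" by (intro sum.cong) auto
    finally show "(\<Sum>u<q^N. if dg q e u = i then g i else 0) = real (\<Sum>u<q^N. ind (dg q e u = i)) *\<^sub>R g i" by simp
  qed
  also have "\<dots> = (\<Sum>i<q. real (q ^ (N - 1)) *\<^sub>R g i)"
  proof (intro sum.cong refl)
    fix i assume i: "i \<in> {..<q}"
    have "(\<Sum>u<q^N. ind (\<forall>i'\<in>{e}. dg q i' u = (\<lambda>_. i) i')) = q ^ (N - card {e})"
      using assms i by (intro digit_count) auto
    then show "real (\<Sum>u<q^N. ind (dg q e u = i)) *\<^sub>R g i = real (q ^ (N - 1)) *\<^sub>R g i" by simp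
  qed
  finally show ?thesis by (simp add: scaleR_sum_right)
qed

definition W :: "nat \<Rightarrow> nat \<Rightarrow> nat \<Rightarrow> nat" where
  "W q N t = dg q (t mod N) (t div N)"

lemma W_split: "e < N \<Longrightarrow> W q N (e + N * u) = dg q e u"
  by (simp add: W_def)

lemma W_lt: "q > 0 \<Longrightarrow> W q N t < q"
  by (simp add: W_def dg_lt)

lemma W_sum:
  fixes g :: "nat \<Rightarrow> 'a::real_vector"
  assumes "q > 0"
  shows "(\<Sum>t<N * q^N. g (W q N t)) = real (N * q ^ (N - 1)) *\<^sub>R (\<Sum>i<q. g i)"
proof -
  have "(\<Sum>t<N * q^N. g (W q N t)) = (\<Sum>u<q^N. \<Sum>e<N. g (W q N (e + N * u)))"
    by (rule sum_split_mult)
  also have "\<dots> = (\<Sum>u<q^N. \<Sum>e<N. g (dg q e u))"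
    by (intro sum.cong refl) (simp add: W_split)
  also have "\<dots> = (\<Sum>e<N. \<Sum>u<q^N. g (dg q e u))" by (rule sum.swap)
  also have "\<dots> = (\<Sum>e<N. real (q ^ (N - 1)) *\<^sub>R (\<Sum>i<q. g i))"
    using assms by (intro sum.cong refl digit_sum) auto
  finally show ?thesis by (simp add: sum_constant_scaleR scaleR_scaleR)
qed

lemma W_prefix_sum:
  fixes g :: "nat \<Rightarrow> 'a::real_vector"
  assumes "q > 0" "N > 0" "j \<le> q" "(\<Sum>i<q. g i) = 0"
  shows "(\<Sum>t<N * (q^(N-1) * j). g (W q N t)) = real (q ^ (N - 1)) *\<^sub>R (\<Sum>b<j. g b)"
proof -
  have "(\<Sum>t<N * (q^(N-1) * j). g (W q N t)) = (\<Sum>u<q^(N-1) * j. \<Sum>e<N. g (W q N (e + N * u)))"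
    by (rule sum_split_mult)
  also have "\<dots> = (\<Sum>e<N. \<Sum>u<q^(N-1) * j. g (dg q e u))"
    by (subst sum.swap) (intro sum.cong refl, simp add: W_split)
  also have "\<dots> = (\<Sum>e<N. \<Sum>y<j. \<Sum>x<q^(N-1). g (dg q e (x + q^(N-1) * y)))"
    by (intro sum.cong refl sum_split_mult)
  also have "\<dots> = (\<Sum>e<N. if e < N - 1 then 0 else real (q ^ (N - 1)) *\<^sub>R (\<Sum>b<j. g b))"
  proof (intro sum.cong refl)
    fix e assume e: "e \<in> {..<N}"
    show "(\<Sum>y<j. \<Sum>x<q^(N-1). g (dg q e (x + q^(N-1) * y))) =
      (if e < N - 1 then 0 else real (q ^ (N - 1)) *\<^sub>R (\<Sum>b<j. g b))"
    proof (cases "e < N - 1")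
      case True
      have "(\<Sum>y<j. \<Sum>x<q^(N-1). g (dg q e (x + q^(N-1) * y))) = (\<Sum>y<j. \<Sum>x<q^(N-1). g (dg q e x))"
        using True assms(1) by (intro sum.cong refl) (simp add: dg_split)
      also have "\<dots> = 0" using True assms by (simp add: digit_sum)
      finally show ?thesis using True by simp
    next
      case False
      then have eN: "e = N - 1" using e by auto
      have "(\<Sum>y<j. \<Sum>x<q^(N-1). g (dg q e (x + q^(N-1) * y))) = (\<Sum>y<j. \<Sum>x<q^(N-1). g y)"
      proof (intro sum.cong refl)
        fix y x assume "y \<in> {..<j}" "x \<in> {..<q^(N-1)}"
        then show "g (dg q e (x + q^(N-1) * y)) = g y"
          using eN assms by (simp add: dg_split dg_def)
      qed
      also have "\<dots> = real (q ^ (N - 1)) *\<^sub>R (\<Sum>b<j. g b)"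
        by (simp add: scaleR_sum_right sum_constant_scaleR)
      finally show ?thesis using False by simp
    qed
  qed
  also have "\<dots> = real (q ^ (N - 1)) *\<^sub>R (\<Sum>b<j. g b)"
  proof -
    have "(\<Sum>e<N. if e < N - 1 then 0 else real (q ^ (N - 1)) *\<^sub>R (\<Sum>b<j. g b))
       = (\<Sum>e\<in>{..<N}. if e = N - 1 then real (q ^ (N - 1)) *\<^sub>R (\<Sum>b<j. g b) else 0)"
      using assms(2) by (intro sum.cong refl) auto
    also have "\<dots> = real (q ^ (N - 1)) *\<^sub>R (\<Sum>b<j. g b)" using assms(2) by (simp add: sum.delta)
    finally show ?thesis .
  qed
  finally show ?thesis .
qed


lemma W_pos:
  assumes "q > 0" "e < N" "i < N" "u < q ^ N"
  shows "W q N ((e + N * u + i) mod (N * q ^ N)) =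
    (if e + i < N then dg q (e + i) u else dg q (e + i - N) ((u + 1) mod q ^ N))"
proof (cases "e + i < N")
  case True
  have "e + N * u + i < N * q ^ N"
  proof -
    have "u + 1 \<le> q ^ N" using assms by simp
    then have "N * (u + 1) \<le> N * q ^ N" by (rule mult_left_mono) simp
    then show ?thesis using True by (simp add: algebra_simps)
  qed
  then have "(e + N * u + i) mod (N * q ^ N) = (e + i) + N * u" by (simp add: algebra_simps)
  then show ?thesis using True by (simp add: W_split)
next
  case False
  define e' where "e' = e + i - N"
  have e': "e' < N" "e + N * u + i = e' + N * (u + 1)" using False assms unfolding e'_def by auto
  show ?thesis
  proof (cases "u + 1 < q ^ N")
    case True
    have "e' + N * (u + 1) < N * q ^ N"
    proof -
      have "u + 2 \<le> q ^ N" using True by simp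
      then have "N * (u + 2) \<le> N * q ^ N" by (rule mult_left_mono) simp
      then show ?thesis using e' by (simp add: algebra_simps)
    qed
    then have "(e' + N * (u + 1)) mod (N * q ^ N) = e' + N * (u + 1)" by simp
    then have hW: "W q N ((e' + N * (u + 1)) mod (N * q ^ N)) = dg q e' (u + 1)"
      using W_split[OF e'(1), of q "u + 1"] by simp
    have r: "(if e + i < N then dg q (e + i) u else dg q (e + i - N) ((u + 1) mod q ^ N)) = dg q e' (u + 1)"
      using False True unfolding e'_def by simp
    show ?thesis unfolding e'(2) hW r ..
  next
    case F2: False
    then have u1: "u + 1 = q ^ N" using assms by simp
    have eq: "e + N * u + i = e' + N * q ^ N" using e'(2) u1 by (metis)
    have "N \<le> N * q ^ N" using assms(1) by simp
    then have "e' < N * q ^ N" using e'(1) by linarith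
    then have hm: "(e + N * u + i) mod (N * q ^ N) = e'"
      unfolding eq by simp
    have hW: "W q N e' = dg q e' 0" using W_split[OF e'(1), of q 0] by simp
    have r: "(if e + i < N then dg q (e + i) u else dg q (e + i - N) ((u + 1) mod q ^ N)) = dg q e' 0"
      using False u1 unfolding e'_def by simp
    show ?thesis unfolding hm hW r ..
  qed
qed

lemma mod_succ_iff:
  assumes "(M::nat) > 0" "v0 < M"
  shows "(a + 1) mod M = v0 \<longleftrightarrow> a mod M = (v0 + M - 1) mod M"
proof -
  have "(a + 1) mod M = (a mod M + 1) mod M" by (metis mod_add_left_eq)
  moreover have "a mod M < M" using assms by simp
  ultimately show ?thesis
  proof (cases "a mod M + 1 < M")
    case True
    then show ?thesis using \<open>(a + 1) mod M = (a mod M + 1) mod M\<close> assms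
      by (cases v0) (auto simp: mod_add_self2)
  next
    case False
    then have am: "a mod M = M - 1" using \<open>a mod M < M\<close> by simp
    then have "(a + 1) mod M = 0" using \<open>(a + 1) mod M = (a mod M + 1) mod M\<close> assms by simp
    then show ?thesis using am assms by (cases v0) auto
  qed
qed

lemma W_cyc:
  assumes q: "q > 0" and N: "N > 0" and k: "k \<le> N" and \<beta>: "\<forall>i<k. \<beta> i < q"
  shows "(\<Sum>t<N * q^N. ind (\<forall>i<k. W q N ((t + i) mod (N * q ^ N)) = \<beta> i)) = N * q ^ (N - k)"
proof -
  let ?L = "N * q ^ N"
  have "(\<Sum>t<N * q^N. ind (\<forall>i<k. W q N ((t + i) mod ?L) = \<beta> i))
     = (\<Sum>u<q^N. \<Sum>e<N. ind (\<forall>i<k. W q N ((e + N * u + i) mod ?L) = \<beta> i))"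
    by (rule sum_split_mult)
  also have "\<dots> = (\<Sum>e<N. \<Sum>u<q^N. ind (\<forall>i<k. W q N ((e + N * u + i) mod ?L) = \<beta> i))"
    by (rule sum.swap)
  also have "\<dots> = (\<Sum>e<N. q ^ (N - k))"
  proof (intro sum.cong refl)
    fix e assume "e \<in> {..<N}"
    then have e: "e < N" by simp
    have Wp: "W q N ((e + N * u + i) mod ?L) =
      (if e + i < N then dg q (e + i) u else dg q (e + i - N) ((u + 1) mod q ^ N))" if "u < q^N" "i < k" for u i
      using W_pos[OF q e _ that(1)] that k by auto
    show "(\<Sum>u<q^N. ind (\<forall>i<k. W q N ((e + N * u + i) mod ?L) = \<beta> i)) = q ^ (N - k)"
    proof (cases "e + k \<le> N")
      case True
      have "(\<Sum>u<q^N. ind (\<forall>i<k. W q N ((e + N * u + i) mod ?L) = \<beta> i))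
          = (\<Sum>u<q^N. ind (\<forall>i'\<in>{e..<e+k}. dg q i' u = \<beta> (i' - e)))"
      proof (intro sum.cong refl)
        fix u assume "u \<in> {..<q^N}"
        then have u: "u < q^N" by simp
        have "(\<forall>i<k. W q N ((e + N * u + i) mod ?L) = \<beta> i) \<longleftrightarrow> (\<forall>i<k. dg q (e + i) u = \<beta> i)"
          using Wp[OF u] True by auto
        also have "\<dots> \<longleftrightarrow> (\<forall>i'\<in>{e..<e+k}. dg q i' u = \<beta> (i' - e))"
        proof safe
          fix i' assume "\<forall>i<k. dg q (e + i) u = \<beta> i" "i' \<in> {e..<e+k}"
          then show "dg q i' u = \<beta> (i' - e)" by (metis atLeastLessThan_iff le_add_diff_inverse less_diff_conv2 add.commute)
        next
          fix i assume "\<forall>i'\<in>{e..<e+k}. dg q i' u = \<beta> (i' - e)" "i < k"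
          then show "dg q (e + i) u = \<beta> i" by (metis add_diff_cancel_left' atLeastLessThan_iff le_add1 nat_add_left_cancel_less)
        qed
        finally show "ind (\<forall>i<k. W q N ((e + N * u + i) mod ?L) = \<beta> i) = ind (\<forall>i'\<in>{e..<e+k}. dg q i' u = \<beta> (i' - e))"
          by simp
      qed
      also have "\<dots> = q ^ (N - card {e..<e+k})"
        using True \<beta> q by (intro digit_count) auto
      finally show ?thesis by simp
    next
      case False
      define l where "l = N - e"
      define m where "m = k - l"
      have lm: "l + m = k" "m \<le> e" "l \<le> k" using False k e unfolding l_def m_def by auto
      have "m \<le> N" using lm e by simp
      obtain v0 where v0: "v0 < q ^ m" "\<forall>i'<m. dg q i' v0 = \<beta> (l + i')"
      proof -
        have "(\<Sum>u<q^m. ind (\<forall>i'\<in>{..<m}. dg q i' u = \<beta> (l + i'))) = q ^ (m - card {..<m})"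
          using \<beta> lm q by (intro digit_count) auto
        then have "(\<Sum>u<q^m. ind (\<forall>i'\<in>{..<m}. dg q i' u = \<beta> (l + i'))) \<noteq> 0" by simp
        then have "card {u\<in>{..<q^m}. \<forall>i'\<in>{..<m}. dg q i' u = \<beta> (l + i')} \<noteq> 0"
          by (simp add: sum_ind_card)
        then have "{u\<in>{..<q^m}. \<forall>i'\<in>{..<m}. dg q i' u = \<beta> (l + i')} \<noteq> {}"
          by (metis card.empty)
        then obtain u where "u < q^m" "\<forall>i'\<in>{..<m}. dg q i' u = \<beta> (l + i')"
          by blast
        then show ?thesis using that by auto
      qed
      define r0 where "r0 = (v0 + q ^ m - 1) mod q ^ m"
      have qm: "q ^ m > 0" using q by simp
      have key: "(\<forall>i'<m. dg q i' ((u + 1) mod q ^ N) = \<beta> (l + i')) \<longleftrightarrow> (\<forall>i<m. dg q i u = dg q i r0)"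
        if u: "u < q^N" for u
      proof -
        have d1: "dg q i' ((u + 1) mod q ^ N) = dg q i' ((u + 1) mod q ^ m)" if "i' < m" for i'
          using that \<open>m \<le> N\<close> q by (simp add: dg_mod)
        have "(\<forall>i'<m. dg q i' ((u + 1) mod q ^ N) = \<beta> (l + i')) \<longleftrightarrow> (u + 1) mod q ^ m = v0"
        proof
          assume "\<forall>i'<m. dg q i' ((u + 1) mod q ^ N) = \<beta> (l + i')"
          then have "\<forall>i'<m. dg q i' ((u + 1) mod q ^ m) = dg q i' v0" using d1 v0 by simp
          then show "(u + 1) mod q ^ m = v0" using digits_unique[OF q _ v0(1)] qm by simp
        next
          assume "(u + 1) mod q ^ m = v0"
          then show "\<forall>i'<m. dg q i' ((u + 1) mod q ^ N) = \<beta> (l + i')" using d1 v0 by simp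
        qed
        also have "\<dots> \<longleftrightarrow> u mod q ^ m = r0" unfolding r0_def by (rule mod_succ_iff[OF qm v0(1)])
        also have "\<dots> \<longleftrightarrow> (\<forall>i<m. dg q i u = dg q i r0)"
        proof
          assume "u mod q ^ m = r0"
          then show "\<forall>i<m. dg q i u = dg q i r0" using q by (metis dg_mod)
        next
          assume a: "\<forall>i<m. dg q i u = dg q i r0"
          have "r0 < q ^ m" unfolding r0_def using qm by simp
          moreover have "\<forall>i<m. dg q i (u mod q ^ m) = dg q i r0" using a q by (simp add: dg_mod)
          ultimately show "u mod q ^ m = r0" using digits_unique[OF q, of "u mod q^m" m r0] qm by simp
        qed
        finally show ?thesis .
      qed
      define S where "S = {..<m} \<union> {e..<N}"
      define c where "c i = (if i < m then dg q i r0 else \<beta> (i - e))" for i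
      have "(\<Sum>u<q^N. ind (\<forall>i<k. W q N ((e + N * u + i) mod ?L) = \<beta> i))
          = (\<Sum>u<q^N. ind (\<forall>i\<in>S. dg q i u = c i))"
      proof (intro sum.cong refl)
        fix u assume "u \<in> {..<q^N}"
        then have u: "u < q^N" by simp
        have "(\<forall>i<k. W q N ((e + N * u + i) mod ?L) = \<beta> i) \<longleftrightarrow>
          (\<forall>i<k. (if e + i < N then dg q (e + i) u else dg q (e + i - N) ((u + 1) mod q ^ N)) = \<beta> i)"
          using Wp[OF u] by auto
        also have "\<dots> \<longleftrightarrow> (\<forall>i<l. dg q (e + i) u = \<beta> i) \<and> (\<forall>i'<m. dg q i' ((u + 1) mod q ^ N) = \<beta> (l + i'))"
        proof safe
          fix i assume H: "\<forall>i<k. (if e + i < N then dg q (e + i) u else dg q (e + i - N) ((u + 1) mod q ^ N)) = \<beta> i"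
            and i: "i < l"
          have "i < k" "e + i < N" using i lm e unfolding l_def by auto
          then show "dg q (e + i) u = \<beta> i" using H[rule_format, of i] by simp
        next
          fix i' assume H: "\<forall>i<k. (if e + i < N then dg q (e + i) u else dg q (e + i - N) ((u + 1) mod q ^ N)) = \<beta> i"
            and i: "i' < m"
          have "l + i' < k" using i lm by simp
          moreover have "\<not> e + (l + i') < N" "e + (l + i') - N = i'" using e unfolding l_def by auto
          ultimately show "dg q i' ((u + 1) mod q ^ N) = \<beta> (l + i')" using H[rule_format, of "l + i'"] by simp
        next
          fix i assume A: "\<forall>i<l. dg q (e + i) u = \<beta> i" and B: "\<forall>i'<m. dg q i' ((u + 1) mod q ^ N) = \<beta> (l + i')"
            and i: "i < k"
          show "(if e + i < N then dg q (e + i) u else dg q (e + i - N) ((u + 1) mod q ^ N)) = \<beta> i"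
          proof (cases "e + i < N")
            case True then show ?thesis using A l_def by auto
          next
            case False
            then have "e + i - N < m" "l + (e + i - N) = i" using i lm e unfolding l_def by auto
            then show ?thesis using B False by metis
          qed
        qed
        also have "\<dots> \<longleftrightarrow> (\<forall>i<l. dg q (e + i) u = \<beta> i) \<and> (\<forall>i<m. dg q i u = dg q i r0)"
          using key[OF u] by simp
        also have "\<dots> \<longleftrightarrow> (\<forall>i\<in>S. dg q i u = c i)"
        proof safe
          fix i assume A: "\<forall>i<l. dg q (e + i) u = \<beta> i" and B: "\<forall>i<m. dg q i u = dg q i r0" and i: "i \<in> S"
          show "dg q i u = c i"
          proof (cases "i < m")
            case True then show ?thesis using B c_def by simp
          next
            case False
            then have "e \<le> i" "i < N" "i - e < l" using i lm unfolding S_def l_def by auto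
            then show ?thesis using A[rule_format, of "i - e"] False c_def by simp
          qed
        next
          fix i assume C: "\<forall>i\<in>S. dg q i u = c i" and i: "i < l"
          have "e + i \<in> S" "\<not> e + i < m" using i lm unfolding S_def l_def by auto
          then show "dg q (e + i) u = \<beta> i" using C c_def by auto
        next
          fix i assume C: "\<forall>i\<in>S. dg q i u = c i" and i: "i < m"
          then show "dg q i u = dg q i r0" using C c_def S_def by auto
        qed
        finally show "ind (\<forall>i<k. W q N ((e + N * u + i) mod ?L) = \<beta> i) = ind (\<forall>i\<in>S. dg q i u = c i)"
          by simp
      qed
      also have "\<dots> = q ^ (N - card S)"
      proof (rule digit_count[OF q])
        show "S \<subseteq> {..<N}" unfolding S_def using \<open>m \<le> N\<close> by auto
        show "\<forall>i\<in>S. c i < q"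
        proof
          fix i assume "i \<in> S"
          show "c i < q"
          proof (cases "i < m")
            case True then show ?thesis using q c_def dg_lt by simp
          next
            case False
            then have "i - e < k" using \<open>i \<in> S\<close> lm unfolding S_def l_def by auto
            then show ?thesis using \<beta> False c_def by simp
          qed
        qed
      qed
      also have "card S = k"
      proof -
        have "card S = card {..<m} + card {e..<N}" unfolding S_def
          by (rule card_Un_disjoint) (use lm in auto)
        then show ?thesis using lm unfolding l_def by simp
      qed
      finally show ?thesis .
    qed
  qed
  finally show ?thesis by simp
qed


lemma sum_split_at:
  fixes f :: "nat \<Rightarrow> 'a::comm_monoid_add"
  assumes "m \<le> L"
  shows "(\<Sum>r<L. f r) = (\<Sum>r\<in>{0..<m}. f r) + (\<Sum>r\<in>{m..<L}. f r)"
  using sum.atLeastLessThan_concat[of 0 m L f] assms by (simp add: atLeast0LessThan)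

lemma sum_rotate:
  fixes f :: "nat \<Rightarrow> 'a::comm_monoid_add"
  assumes "R < L"
  shows "(\<Sum>r<L. f ((r + R) mod L)) = (\<Sum>t<L. f t)"
proof -
  have "(\<Sum>r<L. f ((r + R) mod L)) = (\<Sum>r\<in>{0..<L-R}. f ((r + R) mod L)) + (\<Sum>r\<in>{L-R..<L}. f ((r + R) mod L))"
    by (rule sum_split_at) simp
  also have "(\<Sum>r\<in>{0..<L-R}. f ((r + R) mod L)) = (\<Sum>r\<in>{0..<L-R}. f (r + R))"
    by (intro sum.cong refl) auto
  also have "\<dots> = (\<Sum>t\<in>{0+R..<(L-R)+R}. f t)" by (rule sum.shift_bounds_nat_ivl[symmetric])
  also have "(\<Sum>r\<in>{L-R..<L}. f ((r + R) mod L)) = (\<Sum>r\<in>{0+(L-R)..<R+(L-R)}. f (r + R - L))"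
  proof (intro sum.cong)
    show "{L-R..<L} = {0+(L-R)..<R+(L-R)}" using assms by auto
  next
    fix r assume "r \<in> {0+(L-R)..<R+(L-R)}"
    then have "L \<le> r + R" "r + R - L < L" using assms by auto
    then show "f ((r + R) mod L) = f (r + R - L)" by (simp add: le_mod_geq)
  qed
  also have "\<dots> = (\<Sum>t\<in>{0..<R}. f (t + (L - R) + R - L))" by (rule sum.shift_bounds_nat_ivl)
  also have "\<dots> = (\<Sum>t\<in>{0..<R}. f t)" using assms by (intro sum.cong refl) auto
  finally show ?thesis using assms
    by (simp add: add.commute sum.atLeastLessThan_concat atLeast0LessThan[symmetric])
qed

lemma sum_rotate_weighted:
  fixes h :: "nat \<Rightarrow> 'a::real_vector"
  assumes "R < L"
  shows "(\<Sum>r<L. real r *\<^sub>R h ((r + R) mod L)) =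
    (\<Sum>t<L. real t *\<^sub>R h t) - real R *\<^sub>R (\<Sum>t<L. h t) + real L *\<^sub>R (\<Sum>t<R. h t)"
proof -
  have "(\<Sum>r<L. real r *\<^sub>R h ((r + R) mod L)) = (\<Sum>r\<in>{0..<L-R}. real r *\<^sub>R h ((r + R) mod L)) + (\<Sum>r\<in>{L-R..<L}. real r *\<^sub>R h ((r + R) mod L))"
    by (rule sum_split_at) simp
  also have "(\<Sum>r\<in>{0..<L-R}. real r *\<^sub>R h ((r + R) mod L)) = (\<Sum>r\<in>{0..<L-R}. real r *\<^sub>R h (r + R))"
    by (intro sum.cong refl) auto
  also have "\<dots> = (\<Sum>t\<in>{0+R..<(L-R)+R}. real (t - R) *\<^sub>R h t)"
    by (subst sum.shift_bounds_nat_ivl) simp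
  also have "\<dots> = (\<Sum>t\<in>{R..<L}. real t *\<^sub>R h t) - real R *\<^sub>R (\<Sum>t\<in>{R..<L}. h t)"
    using assms by (simp add: of_nat_diff scaleR_diff_left sum_subtractf scaleR_sum_right)
  also have "(\<Sum>r\<in>{L-R..<L}. real r *\<^sub>R h ((r + R) mod L)) = (\<Sum>r\<in>{0+(L-R)..<R+(L-R)}. real r *\<^sub>R h (r + R - L))"
  proof (intro sum.cong)
    show "{L-R..<L} = {0+(L-R)..<R+(L-R)}" using assms by auto
  next
    fix r assume "r \<in> {0+(L-R)..<R+(L-R)}"
    then have "L \<le> r + R" "r + R - L < L" using assms by auto
    then show "real r *\<^sub>R h ((r + R) mod L) = real r *\<^sub>R h (r + R - L)" by (simp add: le_mod_geq)
  qed
  also have "\<dots> = (\<Sum>t\<in>{0..<R}. real (t + (L - R)) *\<^sub>R h (t + (L - R) + R - L))" by (rule sum.shift_bounds_nat_ivl)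
  also have "\<dots> = (\<Sum>t\<in>{0..<R}. real t *\<^sub>R h t + real L *\<^sub>R h t - real R *\<^sub>R h t)"
    using assms by (intro sum.cong refl) (auto simp: of_nat_diff algebra_simps)
  also have "\<dots> = (\<Sum>t\<in>{0..<R}. real t *\<^sub>R h t) + real L *\<^sub>R (\<Sum>t\<in>{0..<R}. h t) - real R *\<^sub>R (\<Sum>t\<in>{0..<R}. h t)"
    by (simp add: sum.distrib sum_subtractf scaleR_sum_right)
  finally have "(\<Sum>r<L. real r *\<^sub>R h ((r + R) mod L)) =
     ((\<Sum>t\<in>{R..<L}. real t *\<^sub>R h t) + (\<Sum>t\<in>{0..<R}. real t *\<^sub>R h t))
     - real R *\<^sub>R ((\<Sum>t\<in>{R..<L}. h t) + (\<Sum>t\<in>{0..<R}. h t)) + real L *\<^sub>R (\<Sum>t\<in>{0..<R}. h t)"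
    by (simp add: algebra_simps)
  also have "(\<Sum>t\<in>{R..<L}. real t *\<^sub>R h t) + (\<Sum>t\<in>{0..<R}. real t *\<^sub>R h t) = (\<Sum>t<L. real t *\<^sub>R h t)"
    using assms by (simp add: add.commute sum.atLeastLessThan_concat atLeast0LessThan[symmetric])
  also have "(\<Sum>t\<in>{R..<L}. h t) + (\<Sum>t\<in>{0..<R}. h t) = (\<Sum>t<L. h t)"
    using assms by (simp add: add.commute sum.atLeastLessThan_concat atLeast0LessThan[symmetric])
  finally show ?thesis by (simp add: atLeast0LessThan)
qed

definition Xb :: "nat \<Rightarrow> nat \<Rightarrow> nat \<Rightarrow> nat \<Rightarrow> nat" where
  "Xb q N j r = W q N ((r + N * (q ^ (N - 1) * j)) mod (N * q ^ N))"

lemma Xb_lt: "q > 0 \<Longrightarrow> Xb q N j r < q"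
  by (simp add: Xb_def W_lt)

lemma Xb_shift_lt: assumes "q > 0" "N > 0" "j < q" shows "N * (q ^ (N - 1) * j) < N * q ^ N"
proof -
  have "q ^ (N - 1) * j < q ^ (N - 1) * q" using assms by simp
  also have "q ^ (N - 1) * q = q ^ N" using assms by (metis Suc_diff_1 power_Suc2)
  finally show ?thesis using assms by simp
qed

lemma Xb_zero:
  assumes "q > 0" "N > 0" "j < q" "r < N - 1"
  shows "Xb q N j r = 0"
proof -
  have lt: "r + N * (q ^ (N - 1) * j) < N * q ^ N"
  proof -
    have "j + 1 \<le> q" using assms by simp
    then have "q ^ (N - 1) * (j + 1) \<le> q ^ (N - 1) * q" by (rule mult_left_mono) simp
    also have "q ^ (N - 1) * q = q ^ N" using assms by (metis Suc_diff_1 power_Suc2)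
    finally have A: "N * (q ^ (N - 1) * (j + 1)) \<le> N * q ^ N" by simp
    have B: "N \<le> N * q ^ (N - 1)" using assms by simp
    have E: "N * (q ^ (N - 1) * (j + 1)) = N * (q ^ (N - 1) * j) + N * q ^ (N - 1)"
      by (simp add: algebra_simps)
    have "r < N" using assms by simp
    then show ?thesis using A B E by linarith
  qed
  have rN: "r < N" using assms by simp
  have "Xb q N j r = dg q r (q ^ (N - 1) * j)"
    unfolding Xb_def using lt W_split[OF rN] by simp
  also have "\<dots> = 0"
  proof -
    have "q ^ (N - 1) = q ^ r * q ^ (N - 1 - r)" using assms by (simp add: power_add[symmetric])
    then have "q ^ (N - 1) * j div q ^ r = q ^ (N - 1 - r) * j" using assms by simp
    moreover have "q ^ (N - 1 - r) * j mod q = 0"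
    proof -
      obtain d where d: "N - 1 - r = Suc d" using assms by (metis Suc_diff_Suc zero_less_diff)
      have e: "q ^ (N - 1 - r) * j = q * (q ^ d * j)" unfolding d by simp
      show ?thesis unfolding e by simp
    qed
    ultimately show ?thesis by (simp add: dg_def)
  qed
  finally show ?thesis .
qed

lemma Xb_cyc:
  assumes q: "q > 0" and N: "N > 0" and k: "k \<le> N" and \<beta>: "\<forall>i<k. \<beta> i < q" and j: "j < q"
  shows "(\<Sum>r<N * q^N. ind (\<forall>i<k. Xb q N j ((r + i) mod (N * q ^ N)) = \<beta> i)) = N * q ^ (N - k)"
proof -
  let ?L = "N * q ^ N" and ?R = "N * (q ^ (N - 1) * j)"
  define P where "P t = ind (\<forall>i<k. W q N ((t + i) mod ?L) = \<beta> i)" for t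
  have "(\<Sum>r<?L. ind (\<forall>i<k. Xb q N j ((r + i) mod ?L) = \<beta> i)) = (\<Sum>r<?L. P ((r + ?R) mod ?L))"
  proof (intro sum.cong refl)
    fix r
    have "Xb q N j ((r + i) mod ?L) = W q N (((r + ?R) mod ?L + i) mod ?L)" for i
      unfolding Xb_def mod_add_left_eq by (simp add: add_ac)
    then show "ind (\<forall>i<k. Xb q N j ((r + i) mod ?L) = \<beta> i) = P ((r + ?R) mod ?L)"
      unfolding P_def by simp
  qed
  also have "\<dots> = (\<Sum>t<?L. P t)" by (rule sum_rotate[OF Xb_shift_lt[OF q N j]])
  also have "\<dots> = N * q ^ (N - k)" unfolding P_def by (rule W_cyc[OF q N k \<beta>])
  finally show ?thesis .
qed

lemma Xb_sum:
  fixes g :: "nat \<Rightarrow> 'a::real_vector"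
  assumes q: "q > 0" and N: "N > 0" and j: "j < q"
  shows "(\<Sum>r<N * q^N. g (Xb q N j r)) = real (N * q ^ (N - 1)) *\<^sub>R (\<Sum>i<q. g i)"
proof -
  have "(\<Sum>r<N * q^N. g (Xb q N j r)) = (\<Sum>t<N * q^N. g (W q N t))"
    unfolding Xb_def by (rule sum_rotate[OF Xb_shift_lt[OF q N j]])
  also have "\<dots> = real (N * q ^ (N - 1)) *\<^sub>R (\<Sum>i<q. g i)" by (rule W_sum[OF q])
  finally show ?thesis .
qed

lemma Xb_weighted:
  fixes g :: "nat \<Rightarrow> 'a::real_vector"
  assumes q: "q > 0" and N: "N > 0" and j: "j < q" and g0: "(\<Sum>i<q. g i) = 0"
  shows "(\<Sum>r<N * q^N. real r *\<^sub>R g (Xb q N j r)) =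
     (\<Sum>t<N * q^N. real t *\<^sub>R g (W q N t)) + real (N * q ^ N) *\<^sub>R (real (q ^ (N - 1)) *\<^sub>R (\<Sum>b<j. g b))"
proof -
  let ?L = "N * q ^ N" and ?R = "N * (q ^ (N - 1) * j)"
  have "(\<Sum>r<?L. real r *\<^sub>R g (Xb q N j r)) = (\<Sum>r<?L. real r *\<^sub>R (\<lambda>t. g (W q N t)) ((r + ?R) mod ?L))"
    unfolding Xb_def by simp
  also have "\<dots> = (\<Sum>t<?L. real t *\<^sub>R g (W q N t)) - real ?R *\<^sub>R (\<Sum>t<?L. g (W q N t)) + real ?L *\<^sub>R (\<Sum>t<?R. g (W q N t))"
    by (rule sum_rotate_weighted[OF Xb_shift_lt[OF q N j]])
  also have "(\<Sum>t<?L. g (W q N t)) = 0" using W_sum[OF q, of g N] g0 by simp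
  also have "(\<Sum>t<?R. g (W q N t)) = real (q ^ (N - 1)) *\<^sub>R (\<Sum>b<j. g b)"
    using W_prefix_sum[OF q N _ g0, of j] j by simp
  finally show ?thesis by simp
qed


definition amax :: "nat \<Rightarrow> (nat \<Rightarrow> real) \<Rightarrow> nat" where
  "amax n f = (SOME i. i \<le> n \<and> (\<forall>j\<le>n. f j \<le> f i))"

lemma amax: "amax n f \<le> n \<and> (\<forall>j\<le>n. f j \<le> f (amax n f))"
proof -
  have "\<exists>i. i \<le> n \<and> (\<forall>j\<le>n. f j \<le> f i)"
  proof -
    have "Max (f ` {..n}) \<in> f ` {..n}" by (intro Max_in) auto
    then obtain i where i: "i \<le> n" "f i = Max (f ` {..n})" by (metis atMost_iff imageE)
    have "\<forall>j\<le>n. f j \<le> f i" using i by auto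
    then show ?thesis using i by blast
  qed
  then show ?thesis unfolding amax_def by (rule someI_ex)
qed

primrec rho :: "real \<Rightarrow> (nat \<Rightarrow> real) \<Rightarrow> nat \<Rightarrow> nat \<Rightarrow> nat \<Rightarrow> real" where
  "rho lam r0 n 0 = r0"
| "rho lam r0 n (Suc t) = (\<lambda>i. rho lam r0 n t i -
      (if i = amax n (rho lam r0 n t) then (1 - lam) * lam ^ t else 0))"

lemma rho_expl: "rho lam r0 n t i = r0 i - (\<Sum>t'<t. if amax n (rho lam r0 n t') = i then (1 - lam) * lam ^ t' else 0)"
  by (induction t) (auto simp: eq_commute)

lemma geom_partial: "(\<Sum>t'<t. (1 - lam) * lam ^ t') = 1 - (lam::real) ^ t"
  by (induction t) (auto simp: algebra_simps)

lemma rho_sum: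
  "(\<Sum>i\<in>{0..n}. rho lam r0 n t i) = (\<Sum>i\<in>{0..n}. r0 i) - (1 - lam ^ t)"
proof -
  have "(\<Sum>i\<in>{0..n}. rho lam r0 n t i) = (\<Sum>i\<in>{0..n}. r0 i) -
      (\<Sum>i\<in>{0..n}. \<Sum>t'<t. if amax n (rho lam r0 n t') = i then (1 - lam) * lam ^ t' else 0)"
    by (simp add: rho_expl sum_subtractf)
  also have "(\<Sum>i\<in>{0..n}. \<Sum>t'<t. if amax n (rho lam r0 n t') = i then (1 - lam) * lam ^ t' else 0)
      = (\<Sum>t'<t. \<Sum>i\<in>{0..n}. if amax n (rho lam r0 n t') = i then (1 - lam) * lam ^ t' else 0)"
    by (rule sum.swap)
  also have "\<dots> = (\<Sum>t'<t. (1 - lam) * lam ^ t')"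
    using amax by (intro sum.cong refl) (simp add: sum.delta)
  finally show ?thesis by (simp add: geom_partial)
qed

lemma csum_weights:
  fixes p :: "nat \<Rightarrow> 'a::real_vector"
  assumes "\<forall>t. g t \<le> n"
  shows "csum lam p g t = (\<Sum>i\<in>{0..n}. (\<Sum>t'<t. if g t' = i then (1 - lam) * lam ^ t' else 0) *\<^sub>R p i)"
proof -
  have "csum lam p g t = (\<Sum>t'<t. \<Sum>i\<in>{0..n}. (if g t' = i then (1 - lam) * lam ^ t' else 0) *\<^sub>R p i)"
    unfolding csum_def
  proof (intro sum.cong refl)
    fix t'
    have "(\<Sum>i\<in>{0..n}. (if g t' = i then (1 - lam) * lam ^ t' else 0) *\<^sub>R p i)
        = (\<Sum>i\<in>{0..n}. if g t' = i then ((1 - lam) * lam ^ t') *\<^sub>R p i else 0)"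
      by (intro sum.cong refl) auto
    also have "\<dots> = ((1 - lam) * lam ^ t') *\<^sub>R p (g t')" using assms by (simp add: sum.delta)
    finally show "((1 - lam) * lam ^ t') *\<^sub>R p (g t') = (\<Sum>i\<in>{0..n}. (if g t' = i then (1 - lam) * lam ^ t' else 0) *\<^sub>R p i)"
      by simp
  qed
  also have "\<dots> = (\<Sum>i\<in>{0..n}. \<Sum>t'<t. (if g t' = i then (1 - lam) * lam ^ t' else 0) *\<^sub>R p i)"
    by (rule sum.swap)
  finally show ?thesis by (simp add: scaleR_sum_left)
qed

lemma aux_alg:
  fixes Z R :: "'a::real_vector"
  assumes "(c::real) > 0"
  shows "(1 / c) *\<^sub>R (a *\<^sub>R Z + R) - Z = (1 / c) *\<^sub>R (R - (c - a) *\<^sub>R Z)"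
proof -
  have "(1 / c) *\<^sub>R (R - (c - a) *\<^sub>R Z) = (1 / c) *\<^sub>R R - ((1 / c) * (c - a)) *\<^sub>R Z"
    by (simp add: scaleR_diff_right)
  also have "(1 / c) * (c - a) = 1 - a / c" using assms by (simp add: field_simps)
  finally show ?thesis by (simp add: scaleR_add_right scaleR_diff_left algebra_simps)
qed

lemma steer:
  fixes p :: "nat \<Rightarrow> 'a::real_normed_vector"
  assumes lam: "0 < lam" "lam < 1"
    and u: "\<forall>i\<in>{0..n}. 0 < u i" "sum u {0..n} = 1"
    and z: "\<forall>i\<in>{0..n}. 0 \<le> z i" "sum z {0..n} = 1"
    and D: "\<forall>i\<in>{0..n}. norm (p i - (\<Sum>i\<in>{0..n}. z i *\<^sub>R p i)) \<le> D"
  shows "\<exists>s g. (\<forall>t. g t \<in> {0..n}) \<and>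
    norm ((1 / lam ^ s) *\<^sub>R ((\<Sum>i\<in>{0..n}. u i *\<^sub>R p i) - csum lam p g s) - (\<Sum>i\<in>{0..n}. z i *\<^sub>R p i))
      \<le> real (n + 1) * (1 - lam) * D"
proof -
  let ?q = "real (n + 1)" and ?e = "1 - lam"
  let ?Pz = "\<Sum>i\<in>{0..n}. z i *\<^sub>R p i"
  have D0: "0 \<le> D" using D by (meson atLeastAtMost_iff le0 norm_ge_zero order_trans)
  define \<mu> where "\<mu> = Min (u ` {0..n})"
  have mu: "0 < \<mu>" "\<forall>i\<in>{0..n}. \<mu> \<le> u i" unfolding \<mu>_def using u by auto
  obtain m where m: "lam ^ m < \<mu>" using real_arch_pow_inv[OF mu(1) lam(2)] by blast
  have zle: "z i \<le> 1" if "i \<in> {0..n}" for i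
  proof -
    have "z i \<le> sum z {0..n}" by (rule member_le_sum) (use z that in auto)
    then show ?thesis using z by simp
  qed
  define r0 where "r0 i = u i - lam ^ m * z i" for i
  have r0pos: "0 \<le> r0 i" if "i \<in> {0..n}" for i
  proof -
    have "lam ^ m * z i \<le> lam ^ m * 1" using zle[OF that] lam by (intro mult_left_mono) auto
    moreover have "\<mu> \<le> u i" using mu(2) that by blast
    ultimately show ?thesis unfolding r0_def using m by linarith
  qed
  have r0sum: "sum r0 {0..n} = 1 - lam ^ m"
    unfolding r0_def using u z by (simp add: sum_subtractf sum_distrib_left[symmetric])
  define g where "g t = amax n (rho lam r0 n t)" for t
  have g: "g t \<in> {0..n}" for t unfolding g_def using amax by auto
  have ex: "\<exists>t. 1 - lam ^ (m - t) < ?q * ?e" by (rule exI[of _ m]) (use lam in auto)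
  define s where "s = (LEAST t. 1 - lam ^ (m - t) < ?q * ?e)"
  have s1: "1 - lam ^ (m - s) < ?q * ?e" unfolding s_def using LeastI_ex[OF ex] .
  have sm: "s \<le> m" unfolding s_def by (rule Least_le) (use lam in auto)
  have before: "?q * ?e * lam ^ t \<le> lam ^ t - lam ^ m" if "t < s" for t
  proof -
    have "\<not> (1 - lam ^ (m - t) < ?q * ?e)" using not_less_Least[OF that[unfolded s_def]] .
    then have "?q * ?e \<le> 1 - lam ^ (m - t)" by simp
    then have "?q * ?e * lam ^ t \<le> (1 - lam ^ (m - t)) * lam ^ t" using lam by (intro mult_right_mono) auto
    also have "\<dots> = lam ^ t - lam ^ m"
      using that sm by (simp add: algebra_simps power_add[symmetric])
    finally show ?thesis .
  qed
  have nonneg: "\<forall>i\<in>{0..n}. 0 \<le> rho lam r0 n t i" if "t \<le> s" for t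
    using that
  proof (induction t)
    case 0 then show ?case using r0pos by simp
  next
    case (Suc t)
    then have ts: "t < s" by simp
    have IH: "\<forall>i\<in>{0..n}. 0 \<le> rho lam r0 n t i" using Suc by simp
    have sumt: "(\<Sum>i\<in>{0..n}. rho lam r0 n t i) = lam ^ t - lam ^ m"
      using rho_sum[of lam r0 n t] r0sum by simp
    have mx: "\<forall>j\<le>n. rho lam r0 n t j \<le> rho lam r0 n t (g t)" using amax g_def by simp
    have "(\<Sum>i\<in>{0..n}. rho lam r0 n t i) \<le> (\<Sum>i\<in>{0..n}. rho lam r0 n t (g t))"
      using mx by (intro sum_mono) auto
    then have A: "lam ^ t - lam ^ m \<le> ?q * rho lam r0 n t (g t)" using sumt by simp
    have B': "?q * (?e * lam ^ t) = ?q * ?e * lam ^ t" by (simp add: mult.assoc)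
    have "?q * (?e * lam ^ t) \<le> ?q * rho lam r0 n t (g t)" using A B' before[OF ts] by linarith
    then have "?e * lam ^ t \<le> rho lam r0 n t (g t)"
      by (rule mult_left_le_imp_le) simp
    then show ?case using IH unfolding g_def by auto
  qed
  have ns: "\<forall>i\<in>{0..n}. 0 \<le> rho lam r0 n s i" using nonneg by simp
  have sums: "(\<Sum>i\<in>{0..n}. rho lam r0 n s i) = lam ^ s - lam ^ m"
    using rho_sum[of lam r0 n s] r0sum by simp
  have cs: "(\<Sum>i\<in>{0..n}. u i *\<^sub>R p i) - csum lam p g s = lam ^ m *\<^sub>R ?Pz + (\<Sum>i\<in>{0..n}. rho lam r0 n s i *\<^sub>R p i)"
  proof -
    have "csum lam p g s = (\<Sum>i\<in>{0..n}. (\<Sum>t'<s. if g t' = i then (1 - lam) * lam ^ t' else 0) *\<^sub>R p i)"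
      using g by (intro csum_weights) auto
    also have "\<dots> = (\<Sum>i\<in>{0..n}. (r0 i - rho lam r0 n s i) *\<^sub>R p i)"
      by (intro sum.cong refl) (simp add: rho_expl g_def)
    finally have "(\<Sum>i\<in>{0..n}. u i *\<^sub>R p i) - csum lam p g s
        = (\<Sum>i\<in>{0..n}. (u i - (r0 i - rho lam r0 n s i)) *\<^sub>R p i)"
      by (simp add: sum_subtractf scaleR_diff_left)
    also have "\<dots> = (\<Sum>i\<in>{0..n}. (lam ^ m * z i) *\<^sub>R p i + rho lam r0 n s i *\<^sub>R p i)"
      by (intro sum.cong refl) (simp add: r0_def algebra_simps)
    finally show ?thesis by (simp add: sum.distrib scaleR_sum_right)
  qed
  have ls: "lam ^ s > 0" using lam by simp
  have "(1 / lam ^ s) *\<^sub>R ((\<Sum>i\<in>{0..n}. u i *\<^sub>R p i) - csum lam p g s) - ?Pz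
      = (1 / lam ^ s) *\<^sub>R (\<Sum>i\<in>{0..n}. rho lam r0 n s i *\<^sub>R (p i - ?Pz))"
  proof -
    have "(\<Sum>i\<in>{0..n}. rho lam r0 n s i *\<^sub>R (p i - ?Pz))
        = (\<Sum>i\<in>{0..n}. rho lam r0 n s i *\<^sub>R p i) - (lam ^ s - lam ^ m) *\<^sub>R ?Pz"
      by (simp add: scaleR_diff_right sum_subtractf scaleR_sum_left[symmetric] sums)
    then show ?thesis unfolding cs using aux_alg[OF ls] by simp
  qed
  also have "norm \<dots> \<le> (1 / lam ^ s) * (\<Sum>i\<in>{0..n}. rho lam r0 n s i * D)"
  proof -
    have "norm (\<Sum>i\<in>{0..n}. rho lam r0 n s i *\<^sub>R (p i - ?Pz)) \<le> (\<Sum>i\<in>{0..n}. norm (rho lam r0 n s i *\<^sub>R (p i - ?Pz)))"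
      by (rule norm_sum)
    also have "\<dots> \<le> (\<Sum>i\<in>{0..n}. rho lam r0 n s i * D)"
      using ns D by (intro sum_mono) (auto intro: mult_left_mono)
    finally show ?thesis using ls by (simp add: divide_right_mono)
  qed
  also have "\<dots> = (1 - lam ^ (m - s)) * D"
  proof -
    have e1: "(\<Sum>i\<in>{0..n}. rho lam r0 n s i * D) = (lam ^ s - lam ^ m) * D"
      by (simp add: sum_distrib_right[symmetric] sums)
    have e2: "lam ^ m = lam ^ s * lam ^ (m - s)" using sm by (simp add: power_add[symmetric])
    have e3: "(lam ^ s - lam ^ s * lam ^ (m - s)) * D = lam ^ s * ((1 - lam ^ (m - s)) * D)"
      by (simp add: algebra_simps)
    have "(1 / lam ^ s) * ((lam ^ s - lam ^ s * lam ^ (m - s)) * D) = (1 - lam ^ (m - s)) * D"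
      unfolding e3 using ls lam by simp
    then show ?thesis unfolding e1 e2 .
  qed
  also have "\<dots> \<le> ?q * ?e * D" using s1 D0 by (intro mult_right_mono) auto
  finally show ?thesis using g by blast
qed


lemma hull_perturb:
  fixes V V' :: "nat \<Rightarrow> 'a::euclidean_space"
  assumes J: "finite J" and s: "s > 0" and rho: "\<rho> > 0" and eta: "\<eta> \<ge> 0"
    and ball: "cball y0 \<rho> \<subseteq> convex hull (V ` J)"
    and close: "\<forall>j\<in>J. norm (V' j - (H + s *\<^sub>R V j)) \<le> \<eta>"
    and y: "norm (y - (H + s *\<^sub>R y0)) < s * \<rho> - \<eta>"
  shows "y \<in> convex hull (V' ` J)"
proof (rule ccontr)
  assume ny: "y \<notin> convex hull (V' ` J)"
  have cl: "closed (convex hull (V' ` J))"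
    using J by (intro compact_imp_closed finite_imp_compact_convex_hull) auto
  obtain a b where ab: "a \<bullet> y < b" "\<forall>x\<in>convex hull (V' ` J). b < a \<bullet> x"
    using separating_hyperplane_closed_point[OF convex_convex_hull cl ny] by blast
  have y0in: "y0 \<in> convex hull (V ` J)" using ball rho by auto
  have Jne: "J \<noteq> {}" using y0in by auto
  then obtain j0 where "j0 \<in> J" by blast
  then have "V' j0 \<in> convex hull (V' ` J)" by (simp add: hull_inc)
  then have "b < a \<bullet> V' j0" using ab by blast
  have a0: "a \<noteq> 0"
  proof
    assume "a = 0"
    then show False using ab \<open>b < a \<bullet> V' j0\<close> by simp
  qed
  then have na: "norm a > 0" by simp
  define v where "v = y0 - \<rho> *\<^sub>R ((1 / norm a) *\<^sub>R a)"
  have "v \<in> cball y0 \<rho>" unfolding v_def using rho na by (simp add: dist_norm)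
  then have "v \<in> convex hull (V ` J)" using ball by blast
  then obtain \<beta> where b: "\<forall>j\<in>J. 0 \<le> \<beta> j" "sum \<beta> J = 1" "v = (\<Sum>j\<in>J. \<beta> j *\<^sub>R V j)"
    by (rule convex_hull_indexedE[OF J])
  define x' where "x' = (\<Sum>j\<in>J. \<beta> j *\<^sub>R V' j)"
  have x'in: "x' \<in> convex hull (V' ` J)" unfolding x'_def using b J by (intro convex_hull_indexedI) auto
  have "x' - (H + s *\<^sub>R v) = (\<Sum>j\<in>J. \<beta> j *\<^sub>R (V' j - (H + s *\<^sub>R V j)))"
  proof -
    have "(\<Sum>j\<in>J. \<beta> j *\<^sub>R (V' j - (H + s *\<^sub>R V j))) = x' - (sum \<beta> J) *\<^sub>R H - s *\<^sub>R (\<Sum>j\<in>J. \<beta> j *\<^sub>R V j)"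
      unfolding x'_def by (simp add: scaleR_diff_right scaleR_add_right sum_subtractf sum.distrib
          scaleR_sum_left scaleR_sum_right algebra_simps)
    then show ?thesis using b by simp
  qed
  then have "norm (x' - (H + s *\<^sub>R v)) \<le> (\<Sum>j\<in>J. \<beta> j * \<eta>)"
    using b close by (auto intro!: order_trans[OF norm_sum] sum_mono mult_left_mono)
  also have "\<dots> = \<eta>" using b by (simp add: sum_distrib_right[symmetric])
  finally have xd: "norm (x' - (H + s *\<^sub>R v)) \<le> \<eta>" .
  have "a \<bullet> x' \<le> a \<bullet> (H + s *\<^sub>R v) + norm a * \<eta>"
  proof -
    have "a \<bullet> (x' - (H + s *\<^sub>R v)) \<le> norm a * norm (x' - (H + s *\<^sub>R v))"
      by (rule norm_cauchy_schwarz)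
    also have "\<dots> \<le> norm a * \<eta>" using xd by (intro mult_left_mono) auto
    finally show ?thesis by (simp add: inner_diff_right)
  qed
  also have "a \<bullet> (H + s *\<^sub>R v) = a \<bullet> H + s * (a \<bullet> y0) - s * \<rho> * norm a"
  proof -
    have h: "a \<bullet> ((1 / norm a) *\<^sub>R a) = norm a"
      using na by (simp add: power2_norm_eq_inner[symmetric] power2_eq_square)
    have "a \<bullet> v = a \<bullet> y0 - \<rho> * (a \<bullet> ((1 / norm a) *\<^sub>R a))"
      unfolding v_def by (simp only: inner_diff_right inner_scaleR_right)
    then have av: "a \<bullet> v = a \<bullet> y0 - \<rho> * norm a" unfolding h .
    have "a \<bullet> (H + s *\<^sub>R v) = a \<bullet> H + s * (a \<bullet> v)" by (simp only: inner_add_right inner_scaleR_right)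
    then show ?thesis unfolding av by (simp add: algebra_simps)
  qed
  finally have A: "a \<bullet> x' \<le> a \<bullet> H + s * (a \<bullet> y0) - norm a * (s * \<rho> - \<eta>)"
    by (simp add: algebra_simps)
  have "a \<bullet> ((H + s *\<^sub>R y0) - y) \<le> norm a * norm ((H + s *\<^sub>R y0) - y)"
    by (rule norm_cauchy_schwarz)
  also have "\<dots> < norm a * (s * \<rho> - \<eta>)" using y na by (simp add: norm_minus_commute)
  finally have B: "a \<bullet> H + s * (a \<bullet> y0) - norm a * (s * \<rho> - \<eta>) < a \<bullet> y"
    by (simp add: inner_add_right inner_diff_right)
  have "b < a \<bullet> x'" using ab x'in by blast
  then show False using A B ab(1) by linarith
qed

lemma V_hull_interior:
  fixes p :: "nat \<Rightarrow> 'a::euclidean_space"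
  assumes aff: "aff_dim (p ` {0..n}) = int DIM('a)"
    and g0: "(\<Sum>i\<le>n. g i) = 0" and gdef: "\<forall>i\<le>n. g i = p i - pb"
  shows "\<exists>y0 \<rho>. \<rho> > 0 \<and> cball y0 \<rho> \<subseteq> convex hull ((\<lambda>j. \<Sum>b<j. g b) ` {..<Suc n})"
proof -
  define V where "V j = (\<Sum>b<j. g b)" for j
  let ?T = "V ` {..<Suc n}"
  let ?A = "affine hull ?T"
  have "V 0 \<in> ?A" by (simp add: hull_inc)
  then have "0 \<in> ?A" unfolding V_def by simp
  then have sub: "subspace ?A" by (simp add: subspace_affine affine_affine_hull)
  have VA: "V j \<in> ?A" if "j \<le> n" for j using that by (simp add: hull_inc)
  have gA: "g i \<in> ?A" if "i \<le> n" for i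
  proof (cases "i < n")
    case True
    have "g i = V (Suc i) - V i" unfolding V_def by simp
    then show ?thesis using VA[of "Suc i"] VA[of i] True sub by (simp add: subspace_diff)
  next
    case False
    then have i: "i = n" using that by simp
    have "(\<Sum>b\<le>n. g b) = V n + g n" unfolding V_def by (simp add: lessThan_Suc_atMost[symmetric])
    then have "g n = - V n" using g0 by (simp add: eq_neg_iff_add_eq_0 add.commute)
    then show ?thesis using VA[of n] sub i by (simp add: subspace_neg)
  qed
  have pA: "p i - p 0 \<in> ?A" if "i \<le> n" for i
  proof -
    have "p i - p 0 = g i - g 0" using gdef that by simp
    then show ?thesis using gA[OF that] gA[of 0] sub by (simp add: subspace_diff)
  qed
  have all: "x - p 0 \<in> ?A" for x
  proof -
    have "x \<in> affine hull (p ` {0..n})" using affine_hull_UNIV[OF aff] by simp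
    then obtain c where c: "sum c (p ` {0..n}) = 1" "(\<Sum>v\<in>p ` {0..n}. c v *\<^sub>R v) = x"
      using affine_hull_finite[of "p ` {0..n}"] by auto
    have "x - p 0 = (\<Sum>v\<in>p ` {0..n}. c v *\<^sub>R (v - p 0))"
      using c by (simp add: scaleR_diff_right sum_subtractf scaleR_sum_left[symmetric])
    also have "\<dots> \<in> ?A"
      using pA sub by (intro subspace_sum subspace_scale) auto
    finally show ?thesis .
  qed
  have "?A = UNIV"
  proof (intro set_eqI iffI)
    fix x show "x \<in> ?A" using all[of "x + p 0"] by simp
  qed simp
  then have "affine hull (convex hull ?T) = UNIV" by (simp add: affine_hull_convex_hull)
  then have "rel_interior (convex hull ?T) = interior (convex hull ?T)" by (rule rel_interior_interior)
  moreover have "rel_interior (convex hull ?T) \<noteq> {}"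
  proof -
    have "?T \<noteq> {}" by blast
    then show ?thesis by (simp add: rel_interior_eq_empty)
  qed
  ultimately obtain y0 where "y0 \<in> interior (convex hull ?T)" by auto
  then obtain \<rho> where "\<rho> > 0" "cball y0 \<rho> \<subseteq> convex hull ?T" using mem_interior_cball by blast
  then show ?thesis unfolding V_def by blast
qed


definition qs :: "real \<Rightarrow> nat \<Rightarrow> real" where
  "qs l r = (\<Sum>s<r. l ^ s)"

lemma qs_pos: "0 < l \<Longrightarrow> 0 < r \<Longrightarrow> 0 < qs l r"
  unfolding qs_def by (intro sum_pos) auto

lemma qs_one: "qs 1 r = real r"
  by (simp add: qs_def)

lemma qs_mult: "(1 - l) * qs l r = 1 - l ^ r"
  unfolding qs_def by (simp add: one_diff_power_eq)

lemma qs_mult': "l ^ r - 1 = - (1 - l) * qs l r"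
  using qs_mult[of l r] by (simp add: algebra_simps)

lemma C_eq:
  fixes p :: "nat \<Rightarrow> 'a::real_vector"
  assumes L: "L > 0" and l: "0 < l" and g: "\<forall>i. g i = p i - pb" and g0: "(\<Sum>r<L. g (X r)) = 0"
  shows "(1 / qs l L) *\<^sub>R (\<Sum>r<L. l ^ r *\<^sub>R p (X r))
     = pb - (1 - l) *\<^sub>R ((1 / qs l L) *\<^sub>R (\<Sum>r<L. qs l r *\<^sub>R g (X r)))"
proof -
  have qL: "qs l L > 0" using qs_pos[OF l L] .
  have "(\<Sum>r<L. l ^ r *\<^sub>R p (X r)) = (\<Sum>r<L. l ^ r *\<^sub>R g (X r) + l ^ r *\<^sub>R pb)"
    using g by (intro sum.cong refl) (simp add: scaleR_diff_right)
  also have "\<dots> = (\<Sum>r<L. l ^ r *\<^sub>R g (X r)) + (\<Sum>r<L. l ^ r) *\<^sub>R pb"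
    by (simp add: sum.distrib scaleR_sum_left)
  also have "(\<Sum>r<L. l ^ r) = qs l L" by (simp add: qs_def)
  also have "(\<Sum>r<L. l ^ r *\<^sub>R g (X r)) = (\<Sum>r<L. (l ^ r - 1) *\<^sub>R g (X r))"
    using g0 by (simp add: scaleR_diff_left sum_subtractf)
  also have "\<dots> = (\<Sum>r<L. (- (1 - l) * qs l r) *\<^sub>R g (X r))"
    by (intro sum.cong refl) (simp only: qs_mult')
  also have "\<dots> = - (1 - l) *\<^sub>R (\<Sum>r<L. qs l r *\<^sub>R g (X r))"
    by (simp add: scaleR_sum_right)
  finally have eq: "(\<Sum>r<L. l ^ r *\<^sub>R p (X r)) = - (1 - l) *\<^sub>R (\<Sum>r<L. qs l r *\<^sub>R g (X r)) + qs l L *\<^sub>R pb" .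
  have "(1 / qs l L) *\<^sub>R (\<Sum>r<L. l ^ r *\<^sub>R p (X r)) = (1 / qs l L) *\<^sub>R (- (1 - l) *\<^sub>R (\<Sum>r<L. qs l r *\<^sub>R g (X r))) + ((1 / qs l L) * qs l L) *\<^sub>R pb"
    unfolding eq by (simp only: scaleR_add_right scaleR_scaleR)
  also have "(1 / qs l L) * qs l L = 1" using qL by simp
  also have "(1 / qs l L) *\<^sub>R (- (1 - l) *\<^sub>R (\<Sum>r<L. qs l r *\<^sub>R g (X r))) = - ((1 - l) *\<^sub>R ((1 / qs l L) *\<^sub>R (\<Sum>r<L. qs l r *\<^sub>R g (X r))))"
    by (metis (no_types) scaleR_scaleR mult.commute scaleR_minus_left)
  finally show ?thesis by simp
qed

lemma C_weights:
  fixes p :: "nat \<Rightarrow> 'a::real_vector"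
  assumes L: "L > 0" and l: "0 < l" and X: "\<forall>r. X r \<le> n"
  defines "c \<equiv> \<lambda>i. (1 / qs l L) * (\<Sum>r<L. if X r = i then l ^ r else 0)"
  shows "(1 / qs l L) *\<^sub>R (\<Sum>r<L. l ^ r *\<^sub>R p (X r)) = (\<Sum>i\<in>{0..n}. c i *\<^sub>R p i)"
    and "\<forall>i\<in>{0..n}. 0 \<le> c i" and "sum c {0..n} = 1"
proof -
  have qL: "qs l L > 0" using qs_pos[OF l L] .
  have "(\<Sum>r<L. l ^ r *\<^sub>R p (X r)) = (\<Sum>r<L. \<Sum>i\<in>{0..n}. (if X r = i then l ^ r else 0) *\<^sub>R p i)"
  proof (intro sum.cong refl)
    fix r
    have "(\<Sum>i\<in>{0..n}. (if X r = i then l ^ r else 0) *\<^sub>R p i) = (\<Sum>i\<in>{0..n}. if X r = i then l ^ r *\<^sub>R p i else 0)"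
      by (intro sum.cong refl) auto
    also have "\<dots> = l ^ r *\<^sub>R p (X r)" using X by (simp add: sum.delta)
    finally show "l ^ r *\<^sub>R p (X r) = (\<Sum>i\<in>{0..n}. (if X r = i then l ^ r else 0) *\<^sub>R p i)" by simp
  qed
  also have "\<dots> = (\<Sum>i\<in>{0..n}. (\<Sum>r<L. if X r = i then l ^ r else 0) *\<^sub>R p i)"
    by (subst sum.swap) (simp add: scaleR_sum_left)
  finally show "(1 / qs l L) *\<^sub>R (\<Sum>r<L. l ^ r *\<^sub>R p (X r)) = (\<Sum>i\<in>{0..n}. c i *\<^sub>R p i)"
    unfolding c_def by (simp add: scaleR_sum_right)
  show "\<forall>i\<in>{0..n}. 0 \<le> c i" unfolding c_def
    by (intro ballI mult_nonneg_nonneg sum_nonneg) (use qL l in auto)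
  have "(\<Sum>i\<in>{0..n}. \<Sum>r<L. if X r = i then l ^ r else 0) = (\<Sum>r<L. \<Sum>i\<in>{0..n}. if X r = i then l ^ r else 0)"
    by (rule sum.swap)
  also have "\<dots> = qs l L" unfolding qs_def using X by (intro sum.cong refl) (simp add: sum.delta)
  moreover have "sum c {0..n} = (\<Sum>i\<in>{0..n}. \<Sum>r<L. if X r = i then l ^ r else 0) / qs l L"
    unfolding c_def by (simp add: sum_divide_distrib)
  ultimately show "sum c {0..n} = 1" using qL by simp
qed

lemma G_cont:
  fixes v :: "nat \<Rightarrow> 'a::real_normed_vector"
  assumes "L > 0"
  shows "isCont (\<lambda>l. (1 / qs l L) *\<^sub>R (\<Sum>r<L. qs l r *\<^sub>R v r)) 1"
proof -
  have "qs 1 L \<noteq> 0" using assms by (simp add: qs_one)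
  then show ?thesis unfolding qs_def by (intro continuous_intros) auto
qed

lemma G_one: "(1 / qs 1 L) *\<^sub>R (\<Sum>r<L. qs 1 r *\<^sub>R v r) = (1 / real L) *\<^sub>R (\<Sum>r<L. real r *\<^sub>R v r)"
  by (simp add: qs_one)

lemma csum_add:
  "csum lam p a (m + r) = csum lam p a m + (\<Sum>i<r. ((1 - lam) * lam ^ (m + i)) *\<^sub>R p (a (m + i)))"
  by (induction r) (auto simp: csum_def)

lemma csum_cong: "(\<forall>t<m. a t = b t) \<Longrightarrow> csum lam p a m = csum lam p b m"
  unfolding csum_def by (intro sum.cong) auto

lemma block_frequency:
  assumes L: "L > 0" and blocks: "\<And>J. (\<Sum>e<L. ind (P (s + J * L + e))) = c"
  shows "(\<lambda>m. real (\<Sum>j<m. ind (P j)) / real m) \<longlonglongrightarrow> real c / real L"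
proof -
  define occ where "occ m = (\<Sum>j<m. ind (P j))" for m
  have occ_add: "occ (m + r) = occ m + (\<Sum>e<r. ind (P (m + e)))" for m r
    unfolding occ_def by (induction r) auto
  have occJ: "occ (s + J * L) = occ s + J * c" for J
  proof (induction J)
    case 0 then show ?case by simp
  next
    case (Suc J)
    have "occ (s + Suc J * L) = occ ((s + J * L) + L)" by (simp add: algebra_simps)
    also have "\<dots> = occ (s + J * L) + c" using occ_add[of "s + J * L" L] blocks[of J] by simp
    finally show ?case using Suc by simp
  qed
  have cL: "c \<le> L"
  proof -
    have "(\<Sum>e<L. ind (P (s + 0 * L + e))) \<le> (\<Sum>e<L. (1::nat))" by (intro sum_mono) auto
    then show ?thesis using blocks[of 0] by simp
  qed
  define K0 where "K0 = real (occ s) + real s + 2 * real L"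
  have bound: "\<bar>real (occ m) - real c / real L * real m\<bar> \<le> K0" if "m \<ge> s" for m
  proof -
    define J where "J = (m - s) div L"
    define r where "r = (m - s) mod L"
    have m: "m = s + J * L + r" unfolding J_def r_def using that by simp
    have rL: "r < L" unfolding r_def using L by simp
    have "occ m = occ (s + J * L) + (\<Sum>e<r. ind (P (s + J * L + e)))" unfolding m by (rule occ_add)
    moreover have "(\<Sum>e<r. ind (P (s + J * L + e))) \<le> r"
    proof -
      have "(\<Sum>e<r. ind (P (s + J * L + e))) \<le> (\<Sum>e<r. (1::nat))" by (intro sum_mono) auto
      then show ?thesis by simp
    qed
    ultimately have o1: "occ s + J * c \<le> occ m" "occ m \<le> occ s + J * c + r" using occJ by auto
    have e1: "real c / real L * real m = real c / real L * real s + real J * real c + real c / real L * real r"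
      unfolding m using L by (simp add: field_simps)
    have cl1: "real c / real L \<le> 1" using cL L by simp
    define cs where "cs = real c / real L * real s"
    define cr where "cr = real c / real L * real r"
    have c0: "0 \<le> real c / real L" by simp
    have f1: "cs \<le> real s" unfolding cs_def by (metis mult_left_le_one_le of_nat_0_le_iff c0 cl1)
    have f2: "cr \<le> real r" unfolding cr_def by (metis mult_left_le_one_le of_nat_0_le_iff c0 cl1)
    have f3: "0 \<le> cs" "0 \<le> cr" unfolding cs_def cr_def by simp_all
    have f4: "real (occ s) + real J * real c \<le> real (occ m)" "real (occ m) \<le> real (occ s) + real J * real c + real r"
      using o1 by (metis of_nat_add of_nat_le_iff of_nat_mult)+
    have f5: "real r \<le> real L" using rL by simp
    have e1': "real c / real L * real m = cs + real J * real c + cr" unfolding cs_def cr_def e1 ..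
    show ?thesis unfolding K0_def e1' abs_le_iff using f1 f2 f3 f4 f5 by (intro conjI) linarith+
  qed
  have "(\<lambda>m. real (occ m) / real m - real c / real L) \<longlonglongrightarrow> 0"
  proof (rule Lim_null_comparison)
    show "\<forall>\<^sub>F m in sequentially. norm (real (occ m) / real m - real c / real L) \<le> K0 / real m"
    proof (rule eventually_sequentiallyI[of "Suc s"])
      fix m assume m: "Suc s \<le> m"
      then have mpos: "real m > 0" by simp
      have "real (occ m) / real m - real c / real L = (real (occ m) - real c / real L * real m) / real m"
        using mpos by (simp add: field_simps)
      then have "norm (real (occ m) / real m - real c / real L) = \<bar>real (occ m) - real c / real L * real m\<bar> / real m"
        using mpos by simp
      also have "\<dots> \<le> K0 / real m" using bound[of m] m mpos by (intro divide_right_mono) auto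
      finally show "norm (real (occ m) / real m - real c / real L) \<le> K0 / real m" .
    qed
    show "(\<lambda>m. K0 / real m) \<longlonglongrightarrow> 0" by (rule lim_const_over_n)
  qed
  then show ?thesis unfolding occ_def by (simp add: LIM_zero_cancel)
qed


lemma norm_in_hull:
  fixes p :: "nat \<Rightarrow> 'a::euclidean_space"
  assumes "y \<in> convex hull (p ` {0..n})"
  shows "norm y \<le> (\<Sum>i\<in>{0..n}. norm (p i))"
proof -
  obtain \<beta> where b: "\<forall>i\<in>{0..n}. 0 \<le> \<beta> i" "sum \<beta> {0..n} = 1" "y = (\<Sum>i\<in>{0..n}. \<beta> i *\<^sub>R p i)"
    by (rule convex_hull_indexedE[OF finite_atLeastAtMost assms])
  have ble: "\<beta> i \<le> 1" if "i \<in> {0..n}" for i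
  proof -
    have "\<beta> i \<le> sum \<beta> {0..n}" by (rule member_le_sum) (use b that in auto)
    then show ?thesis using b by simp
  qed
  have "norm y \<le> (\<Sum>i\<in>{0..n}. norm (\<beta> i *\<^sub>R p i))" unfolding b(3) by (rule norm_sum)
  also have "\<dots> \<le> (\<Sum>i\<in>{0..n}. norm (p i))"
  proof (intro sum_mono)
    fix i assume i: "i \<in> {0..n}"
    have "norm (\<beta> i *\<^sub>R p i) = \<beta> i * norm (p i)" using b i by simp
    also have "\<dots> \<le> 1 * norm (p i)" using ble[OF i] by (intro mult_right_mono) auto
    finally show "norm (\<beta> i *\<^sub>R p i) \<le> norm (p i)" by simp
  qed
  finally show ?thesis .
qed

lemma norm_csum_le:
  fixes p :: "nat \<Rightarrow> 'a::real_normed_vector"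
  assumes "0 < lam" "lam < 1" "\<forall>t. norm (p (a t)) \<le> M"
  shows "norm (\<Sum>i<r. ((1 - lam) * lam ^ (m + i)) *\<^sub>R p (a i)) \<le> lam ^ m * M"
proof -
  have "norm (\<Sum>i<r. ((1 - lam) * lam ^ (m + i)) *\<^sub>R p (a i)) \<le> (\<Sum>i<r. norm (((1 - lam) * lam ^ (m + i)) *\<^sub>R p (a i)))"
    by (rule norm_sum)
  also have "\<dots> \<le> (\<Sum>i<r. ((1 - lam) * lam ^ (m + i)) * M)"
    using assms by (intro sum_mono) (simp add: mult_left_mono)
  also have "\<dots> = lam ^ m * M * (\<Sum>i<r. (1 - lam) * lam ^ i)"
    by (simp add: sum_distrib_left sum_distrib_right power_add algebra_simps)
  also have "\<dots> = lam ^ m * M * (1 - lam ^ r)" by (simp add: geom_partial)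
  also have "\<dots> \<le> lam ^ m * M * 1"
  proof -
    have "0 \<le> M" using assms(3) norm_ge_zero order_trans by blast
    then show ?thesis using assms by (intro mult_left_mono) auto
  qed
  finally show ?thesis by simp
qed

lemma main_construction:
  fixes p :: "nat \<Rightarrow> 'a::euclidean_space"
  assumes N: "N > 0" "k \<le> N" "k \<ge> 1"
    and lam: "0 < lam" "lam < 1" "1 - lam ^ (N * Suc n ^ N) \<le> 1 / real (Suc n)"
    and gam: "\<forall>j<Suc n. 0 \<le> \<gamma> j" "(\<Sum>j<Suc n. \<gamma> j) = 1"
    and Ddef: "D = 2 * (\<Sum>i\<in>{0..n}. norm (p i))"
    and hullC: "\<And>y. norm (y - (\<Sum>j<Suc n. \<gamma> j *\<^sub>R ((1 / qs lam (N * Suc n ^ N)) *\<^sub>R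
                   (\<Sum>r<N * Suc n ^ N. lam ^ r *\<^sub>R p (Xb (Suc n) N j r)))))
             \<le> real (Suc n) * (1 - lam) * D
          \<Longrightarrow> y \<in> convex hull ((\<lambda>j. (1 / qs lam (N * Suc n ^ N)) *\<^sub>R
                   (\<Sum>r<N * Suc n ^ N. lam ^ r *\<^sub>R p (Xb (Suc n) N j r))) ` {..<Suc n})"
    and x: "x \<in> interior (convex hull (p ` {0..n}))"
  shows "\<exists>a. (\<forall>j. a j \<in> {0..n}) \<and> coding_map lam p a = x \<and> simply_normal n k a"
proof -
  define q where "q = Suc n"
  define L where "L = N * q ^ N"
  have q0: "q > 0" unfolding q_def by simp
  have L0: "L > 0" unfolding L_def using N q0 by simp
  define C where "C j = (1 / qs lam L) *\<^sub>R (\<Sum>r<L. lam ^ r *\<^sub>R p (Xb q N j r))" for j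
  define Cset where "Cset = convex hull (C ` {..<q})"
  define K where "K = convex hull (p ` {0..n})"
  define Mp where "Mp = (\<Sum>i\<in>{0..n}. norm (p i))"
  define \<Lambda> where "\<Lambda> = lam ^ L"
  have Lam: "0 < \<Lambda>" "\<Lambda> < 1" "1 - \<Lambda> \<le> 1 / real q"
    unfolding \<Lambda>_def using lam L0 by (auto simp: q_def L_def power_less_one_iff)
  have Xin: "Xb q N j r \<le> n" for j r using Xb_lt[OF q0, of N j r] unfolding q_def by simp
  (* weights of the block fixed points *)
  define c where "c j i = (1 / qs lam L) * (\<Sum>r<L. if Xb q N j r = i then lam ^ r else 0)" for j i
  have Cw1: "C j = (\<Sum>i\<in>{0..n}. c j i *\<^sub>R p i)" for j
    using C_weights(1)[where L=L and l=lam and X="Xb q N j" and n=n and p=p] L0 lam(1) Xin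
    unfolding C_def c_def by auto
  have Cw23: "(\<forall>i\<in>{0..n}. 0 \<le> c j i) \<and> sum (c j) {0..n} = 1" for j
    using C_weights(2,3)[where L=L and l=lam and X="Xb q N j" and n=n] L0 lam(1) Xin
    unfolding c_def by auto
  have Cw: "C j = (\<Sum>i\<in>{0..n}. c j i *\<^sub>R p i)" "\<forall>i\<in>{0..n}. 0 \<le> c j i" "sum (c j) {0..n} = 1" for j
    using Cw1 Cw23 by auto
  have CK: "C j \<in> K" for j unfolding K_def Cw(1) using Cw(2,3) by (intro convex_hull_indexedI) auto
  have CsetK: "Cset \<subseteq> K" unfolding Cset_def K_def
    using CK unfolding K_def by (intro hull_minimal) (auto simp: convex_convex_hull)
  have normK: "norm y \<le> Mp" if "y \<in> K" for y using norm_in_hull that unfolding K_def Mp_def by blast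
  have pMp: "norm (p i) \<le> Mp" if "i \<le> n" for i
    unfolding Mp_def by (rule member_le_sum) (use that in auto)
  define z where "z i = (\<Sum>j<q. \<gamma> j * c j i)" for i
  have z0: "\<forall>i\<in>{0..n}. 0 \<le> z i" unfolding z_def
    by (intro ballI sum_nonneg mult_nonneg_nonneg) (use gam Cw(2) q_def in auto)
  have z1: "sum z {0..n} = 1"
  proof -
    have "sum z {0..n} = (\<Sum>j<q. \<gamma> j * sum (c j) {0..n})"
      unfolding z_def by (subst sum.swap) (simp add: sum_distrib_left)
    also have "\<dots> = 1" using Cw(3) gam q_def by simp
    finally show ?thesis .
  qed
  have Pz: "(\<Sum>i\<in>{0..n}. z i *\<^sub>R p i) = (\<Sum>j<q. \<gamma> j *\<^sub>R C j)"
  proof -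
    have "(\<Sum>i\<in>{0..n}. z i *\<^sub>R p i) = (\<Sum>j<q. \<Sum>i\<in>{0..n}. (\<gamma> j * c j i) *\<^sub>R p i)"
      unfolding z_def by (subst sum.swap) (simp add: scaleR_sum_left)
    also have "\<dots> = (\<Sum>j<q. \<gamma> j *\<^sub>R C j)"
      by (intro sum.cong refl) (simp add: Cw(1) scaleR_sum_right)
    finally show ?thesis .
  qed
  have PzK: "(\<Sum>i\<in>{0..n}. z i *\<^sub>R p i) \<in> K" unfolding K_def using z0 z1 by (intro convex_hull_indexedI) auto
  have Dbound: "\<forall>i\<in>{0..n}. norm (p i - (\<Sum>i\<in>{0..n}. z i *\<^sub>R p i)) \<le> D"
  proof
    fix i assume i: "i \<in> {0..n}"
    have "norm (p i - (\<Sum>i\<in>{0..n}. z i *\<^sub>R p i)) \<le> norm (p i) + norm (\<Sum>i\<in>{0..n}. z i *\<^sub>R p i)"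
      by (rule norm_triangle_ineq4)
    also have "\<dots> \<le> Mp + Mp" using pMp[of i] normK[OF PzK] i by (intro add_mono) auto
    finally show "norm (p i - (\<Sum>i\<in>{0..n}. z i *\<^sub>R p i)) \<le> D" unfolding Ddef Mp_def by simp
  qed
  obtain u where u: "\<forall>i\<in>{0..n}. 0 < u i" "sum u {0..n} = 1" "x = (\<Sum>i\<in>{0..n}. u i *\<^sub>R p i)"
    using interior_pos_weights[OF x] by blast
  obtain s w where w: "\<forall>t. w t \<in> {0..n}"
    and ws: "norm ((1 / lam ^ s) *\<^sub>R (x - csum lam p w s) - (\<Sum>i\<in>{0..n}. z i *\<^sub>R p i))
      \<le> real (n + 1) * (1 - lam) * D"
    using steer[OF lam(1,2) u(1,2) z0 z1 Dbound] unfolding u(3)[symmetric] by blast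
  define ys where "ys = (1 / lam ^ s) *\<^sub>R (x - csum lam p w s)"
  have ysC: "ys \<in> Cset"
  proof -
    have "norm (ys - (\<Sum>j<Suc n. \<gamma> j *\<^sub>R C j)) \<le> real (Suc n) * (1 - lam) * D"
      using ws Pz unfolding ys_def q_def by simp
    then show ?thesis using hullC unfolding Cset_def C_def q_def L_def by blast
  qed
  have step: "\<exists>jy. fst jy < q \<and> snd jy \<in> Cset \<and> y = \<Lambda> *\<^sub>R snd jy + (1 - \<Lambda>) *\<^sub>R C (fst jy)"
    if yC: "y \<in> Cset" for y
  proof -
    obtain \<beta> where b: "\<forall>j\<in>{..<q}. 0 \<le> \<beta> j" "sum \<beta> {..<q} = 1" "y = (\<Sum>j\<in>{..<q}. \<beta> j *\<^sub>R C j)"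
      by (rule convex_hull_indexedE[OF finite_lessThan yC[unfolded Cset_def]])
    have "1 - \<Lambda> \<le> 1 / card {..<q}" using Lam by simp
    then obtain j \<beta>' where j: "j \<in> {..<q}" "\<forall>i\<in>{..<q}. 0 \<le> \<beta>' i" "sum \<beta>' {..<q} = 1"
      "(\<Sum>i\<in>{..<q}. \<beta> i *\<^sub>R C i) = \<Lambda> *\<^sub>R (\<Sum>i\<in>{..<q}. \<beta>' i *\<^sub>R C i) + (1 - \<Lambda>) *\<^sub>R C j"
      using cover_step[OF finite_lessThan b(1,2) Lam(1)] by blast
    have "(\<Sum>i\<in>{..<q}. \<beta>' i *\<^sub>R C i) \<in> Cset" unfolding Cset_def using j by (intro convex_hull_indexedI) auto
    then show ?thesis using j b(3) by (intro exI[of _ "(j, \<Sum>i\<in>{..<q}. \<beta>' i *\<^sub>R C i)"]) auto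
  qed
  define nxt where "nxt y = (SOME jy. fst jy < q \<and> snd jy \<in> Cset \<and> y = \<Lambda> *\<^sub>R snd jy + (1 - \<Lambda>) *\<^sub>R C (fst jy))" for y
  have nxt: "fst (nxt y) < q \<and> snd (nxt y) \<in> Cset \<and> y = \<Lambda> *\<^sub>R snd (nxt y) + (1 - \<Lambda>) *\<^sub>R C (fst (nxt y))"
    if "y \<in> Cset" for y
    unfolding nxt_def by (rule someI_ex[OF step[OF that]])
  define Ys where "Ys = rec_nat ys (\<lambda>_ y. snd (nxt y))"
  have Ys0: "Ys 0 = ys" and YsS: "Ys (Suc J) = snd (nxt (Ys J))" for J unfolding Ys_def by simp_all
  have YsC: "Ys J \<in> Cset" for J by (induction J) (use ysC nxt in \<open>auto simp: Ys0 YsS\<close>)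
  define js where "js J = fst (nxt (Ys J))" for J
  have js: "js J < q" for J unfolding js_def using nxt[OF YsC] by blast
  have Ysrel: "Ys J = \<Lambda> *\<^sub>R Ys (Suc J) + (1 - \<Lambda>) *\<^sub>R C (js J)" for J
    unfolding js_def YsS using nxt[OF YsC] by blast
  define a where "a t = (if t < s then w t else Xb q N (js ((t - s) div L)) ((t - s) mod L))" for t
  have a_in: "\<forall>t. a t \<in> {0..n}" unfolding a_def using w Xin by auto
  have a_block: "a (s + J * L + r) = Xb q N (js J) r" if "r < L" for J r
  proof -
    have "(J * L + r) div L = J" "(J * L + r) mod L = r" using that L0 by auto
    then show ?thesis unfolding a_def by (simp add: add.assoc)
  qed
  have pa: "norm (p (a t)) \<le> Mp" for t using pMp a_in by auto
  have pa': "\<forall>t. norm (p (a t)) \<le> Mp" using pa by blast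
  have blocksum: "(\<Sum>i<L. ((1 - lam) * lam ^ (m + i)) *\<^sub>R p (Xb q N j i)) = lam ^ m *\<^sub>R ((1 - \<Lambda>) *\<^sub>R C j)" for m j
  proof -
    have "(\<Sum>i<L. ((1 - lam) * lam ^ (m + i)) *\<^sub>R p (Xb q N j i)) = (lam ^ m * (1 - lam)) *\<^sub>R (\<Sum>i<L. lam ^ i *\<^sub>R p (Xb q N j i))"
      by (simp add: scaleR_sum_right power_add algebra_simps)
    also have "(\<Sum>i<L. lam ^ i *\<^sub>R p (Xb q N j i)) = qs lam L *\<^sub>R C j"
      unfolding C_def using qs_pos[OF lam(1) L0] by simp
    also have "(lam ^ m * (1 - lam)) *\<^sub>R (qs lam L *\<^sub>R C j) = lam ^ m *\<^sub>R (((1 - lam) * qs lam L) *\<^sub>R C j)"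
      by (simp add: algebra_simps)
    finally show ?thesis unfolding qs_mult \<Lambda>_def .
  qed
  have orbit: "x - csum lam p a (s + J * L) = lam ^ (s + J * L) *\<^sub>R Ys J" for J
  proof (induction J)
    case 0
    have "csum lam p a s = csum lam p w s" by (rule csum_cong) (simp add: a_def)
    then show ?case using lam(1) by (simp add: Ys0 ys_def)
  next
    case (Suc J)
    have "csum lam p a (s + Suc J * L) = csum lam p a (s + J * L + L)" by (simp add: algebra_simps)
    also have "\<dots> = csum lam p a (s + J * L) + (\<Sum>i<L. ((1 - lam) * lam ^ (s + J * L + i)) *\<^sub>R p (a (s + J * L + i)))"
      by (rule csum_add)
    also have "(\<Sum>i<L. ((1 - lam) * lam ^ (s + J * L + i)) *\<^sub>R p (a (s + J * L + i)))
        = (\<Sum>i<L. ((1 - lam) * lam ^ (s + J * L + i)) *\<^sub>R p (Xb q N (js J) i))"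
      by (intro sum.cong refl) (simp add: a_block)
    also have "\<dots> = lam ^ (s + J * L) *\<^sub>R ((1 - \<Lambda>) *\<^sub>R C (js J))" by (rule blocksum)
    finally have "x - csum lam p a (s + Suc J * L) = lam ^ (s + J * L) *\<^sub>R (Ys J - (1 - \<Lambda>) *\<^sub>R C (js J))"
      using Suc by (simp add: scaleR_diff_right)
    also have "Ys J - (1 - \<Lambda>) *\<^sub>R C (js J) = \<Lambda> *\<^sub>R Ys (Suc J)" using Ysrel[of J] by simp
    also have "lam ^ (s + J * L) *\<^sub>R (\<Lambda> *\<^sub>R Ys (Suc J)) = lam ^ (s + Suc J * L) *\<^sub>R Ys (Suc J)"
      unfolding \<Lambda>_def by (simp add: power_add algebra_simps)
    finally show ?case .
  qed
  define B where "B = 2 * Mp / lam ^ (s + L)"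
  have xK: "x \<in> K" using x interior_subset unfolding K_def by blast
  have bound: "norm (x - csum lam p a t) \<le> B * lam ^ t" for t
  proof (cases "t < s")
    case True
    have "norm (x - csum lam p a t) \<le> norm x + norm (csum lam p a t)" by (rule norm_triangle_ineq4)
    also have "norm (csum lam p a t) \<le> lam ^ 0 * Mp"
      unfolding csum_def using norm_csum_le[where p=p and a=a and M=Mp and r=t and m=0, OF lam(1,2) pa'] by simp
    also have "norm x \<le> Mp" using normK[OF xK] .
    finally have "norm (x - csum lam p a t) \<le> 2 * Mp" by simp
    also have "\<dots> = B * lam ^ (s + L)" unfolding B_def using lam by simp
    also have "\<dots> \<le> B * lam ^ t"
    proof (intro mult_left_mono)
      show "lam ^ (s + L) \<le> lam ^ t" using True lam by (intro power_decreasing) auto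
      show "0 \<le> B" unfolding B_def Mp_def using lam by (intro divide_nonneg_pos mult_nonneg_nonneg sum_nonneg) auto
    qed
    finally show ?thesis .
  next
    case False
    define J where "J = (t - s) div L"
    define r where "r = (t - s) mod L"
    have t: "t = s + J * L + r" unfolding J_def r_def using False by simp
    have rL: "r < L" unfolding r_def using L0 by simp
    have eqt: "x - csum lam p a t = lam ^ (s + J * L) *\<^sub>R Ys J - (\<Sum>i<r. ((1 - lam) * lam ^ (s + J * L + i)) *\<^sub>R p (a (s + J * L + i)))"
      unfolding t csum_add orbit[symmetric] by simp
    have "norm (x - csum lam p a t) \<le> norm (lam ^ (s + J * L) *\<^sub>R Ys J) + norm (\<Sum>i<r. ((1 - lam) * lam ^ (s + J * L + i)) *\<^sub>R p (a (s + J * L + i)))"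
      unfolding eqt by (rule norm_triangle_ineq4)
    also have "norm (lam ^ (s + J * L) *\<^sub>R Ys J) \<le> lam ^ (s + J * L) * Mp"
      using normK[of "Ys J"] YsC CsetK lam by (auto intro!: mult_left_mono)
    also have "norm (\<Sum>i<r. ((1 - lam) * lam ^ (s + J * L + i)) *\<^sub>R p (a (s + J * L + i))) \<le> lam ^ (s + J * L) * Mp"
      using norm_csum_le[where p=p and a="\<lambda>i. a (s + J * L + i)" and M=Mp and r=r and m="s + J * L", OF lam(1,2)] pa by simp
    finally have "norm (x - csum lam p a t) \<le> 2 * Mp * lam ^ (s + J * L)" by simp
    also have "lam ^ (s + J * L) = lam ^ t / lam ^ r" unfolding t using lam by (simp add: power_add)
    also have "2 * Mp * (lam ^ t / lam ^ r) \<le> B * lam ^ t"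
    proof -
      have "lam ^ (s + L) \<le> lam ^ r" using rL lam by (intro power_decreasing) auto
      then have "1 / lam ^ r \<le> 1 / lam ^ (s + L)" using lam by (intro divide_left_mono) auto
      moreover have "0 \<le> 2 * Mp * lam ^ t" unfolding Mp_def using lam by (intro mult_nonneg_nonneg sum_nonneg) auto
      ultimately have "2 * Mp * lam ^ t * (1 / lam ^ r) \<le> 2 * Mp * lam ^ t * (1 / lam ^ (s + L))"
        by (rule mult_left_mono)
      then show ?thesis unfolding B_def by (simp add: field_simps)
    qed
    finally show ?thesis .
  qed
  have coding: "coding_map lam p a = x" by (rule coding_from_orbit[OF lam(1,2) a_in bound])
  have normal: "simply_normal n k a" unfolding simply_normal_def
  proof (intro allI impI)
    fix b :: "nat list" assume b: "length b = k \<and> set b \<subseteq> {0..n}"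
    define P where "P j = (\<forall>i<length b. a (j + i) = b ! i)" for j
    have occ: "occ_count b a m = (\<Sum>j<m. ind (P j))" for m
      unfolding occ_count_def P_def by (simp add: sum_ind_card)
    have bq: "\<forall>i<k. b ! i < q" using b unfolding q_def by (auto simp: less_Suc_eq_le dest!: nth_mem)
    have blocks: "(\<Sum>e<L. ind (P (s + J * L + e))) = N * q ^ (N - k)" for J
    proof -
      have win: "a (s + J * L + e + i) = Xb q N (js J) ((e + i) mod L)" if "e < L" "i < k" for e i
      proof (cases "e + i < L")
        case True
        then show ?thesis using a_block[OF True, of J] by (simp add: add.assoc)
      next
        case False
        define r' where "r' = e + i - L"
        have NL: "N \<le> L" unfolding L_def using q0 by simp
        have r': "r' < N - 1" "e + i = L + r'" "r' < L" using False that N NL unfolding r'_def by auto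
        have "s + J * L + e + i = s + Suc J * L + r'" using r'(2) by simp
        then have "a (s + J * L + e + i) = a (s + Suc J * L + r')" by (rule arg_cong)
        also have "\<dots> = Xb q N (js (Suc J)) r'" by (rule a_block[OF r'(3)])
        also have "\<dots> = 0" using Xb_zero[OF q0 N(1) js r'(1)] .
        also have "\<dots> = Xb q N (js J) r'" using Xb_zero[OF q0 N(1) js r'(1)] ..
        also have "r' = (e + i) mod L" using r' by simp
        finally show ?thesis .
      qed
      have "(\<Sum>e<L. ind (P (s + J * L + e))) = (\<Sum>e<L. ind (\<forall>i<k. Xb q N (js J) ((e + i) mod L) = b ! i))"
      proof (intro sum.cong refl)
        fix e assume "e \<in> {..<L}"
        then have "P (s + J * L + e) \<longleftrightarrow> (\<forall>i<k. Xb q N (js J) ((e + i) mod L) = b ! i)"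
          unfolding P_def using win b by (auto simp: add.assoc)
        then show "ind (P (s + J * L + e)) = ind (\<forall>i<k. Xb q N (js J) ((e + i) mod L) = b ! i)" by simp
      qed
      also have "\<dots> = N * q ^ (N - k)" unfolding L_def by (rule Xb_cyc[OF q0 N(1) N(2) bq js])
      finally show ?thesis .
    qed
    have "(\<lambda>m. real (\<Sum>j<m. ind (P j)) / real m) \<longlonglongrightarrow> real (N * q ^ (N - k)) / real L"
      by (rule block_frequency[OF L0 blocks])
    moreover have "real (N * q ^ (N - k)) / real L = 1 / real (n + 1) ^ k"
    proof -
      have "q ^ N = q ^ (N - k) * q ^ k" using N by (simp add: power_add[symmetric])
      then have "real L = real (N * q ^ (N - k)) * real q ^ k" unfolding L_def by simp
      then show ?thesis using N q0 unfolding q_def by simp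
    qed
    ultimately show "(\<lambda>m. real (occ_count b a m) / real m) \<longlonglongrightarrow> 1 / real (n + 1) ^ k"
      unfolding occ by simp
  qed
  show ?thesis using a_in coding normal by blast
qed


theorem theorem1p1:
  fixes p :: "nat \<Rightarrow> 'a::euclidean_space" and n k :: nat
  assumes "inj_on p {0..n}"
    and "aff_dim (p ` {0..n}) = int DIM('a)"
    and "k \<ge> 1"
  shows "\<exists>\<delta>>0. \<forall>lam. 0 < lam \<and> 1 - \<delta> < lam \<and> lam < 1 \<longrightarrow>
           normal_points lam p n k = interior (attractor lam p n)"
proof -
  note aff = assms(2)
  define q where "q = Suc n"
  have n1: "n \<ge> 1"
  proof (rule ccontr)
    assume "\<not> n \<ge> 1"
    then have "n = 0" by simp
    then have "p ` {0..n} = {p 0}" by simp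
    then have "aff_dim (p ` {0..n}) = 0" by simp
    then show False using aff by simp
  qed
  have q2: "q \<ge> 2" unfolding q_def using n1 by simp
  have q0: "q > 0" using q2 by simp
  define pb where "pb = (\<Sum>i\<in>{0..n}. (1 / real q) *\<^sub>R p i)"
  define g where "g i = p i - pb" for i
  have g0': "(\<Sum>i\<in>{0..n}. g i) = 0"
  proof -
    have "(\<Sum>i\<in>{0..n}. g i) = (\<Sum>i\<in>{0..n}. p i) - real (Suc n) *\<^sub>R pb"
      unfolding g_def by (simp add: sum_subtractf sum_constant_scaleR)
    also have "real (Suc n) *\<^sub>R pb = (\<Sum>i\<in>{0..n}. p i)"
      unfolding pb_def q_def by (simp add: scaleR_sum_right)
    finally show ?thesis by simp
  qed
  have g0: "(\<Sum>i\<le>n. g i) = 0" using g0' by (simp add: atLeast0AtMost)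
  have g0q: "(\<Sum>i<q. g i) = 0" using g0 unfolding q_def by (simp add: lessThan_Suc_atMost)
  define V where "V j = (\<Sum>b<j. g b)" for j
  obtain y0 \<rho> where rho: "\<rho> > 0" "cball y0 \<rho> \<subseteq> convex hull (V ` {..<q})"
    using V_hull_interior[OF aff g0, of pb] unfolding g_def V_def q_def by auto
  have "y0 \<in> convex hull (V ` {..<q})" using rho by auto
  then obtain \<gamma> where gam: "\<forall>j\<in>{..<q}. 0 \<le> \<gamma> j" "sum \<gamma> {..<q} = 1" "y0 = (\<Sum>j\<in>{..<q}. \<gamma> j *\<^sub>R V j)"
    by (rule convex_hull_indexedE[OF finite_lessThan])
  define Mp where "Mp = (\<Sum>i\<in>{0..n}. norm (p i))"
  define D where "D = 2 * Mp"
  have D0: "D \<ge> 0" unfolding D_def Mp_def by (simp add: sum_nonneg)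
  define N where "N = k + nat \<lceil>(real q * D + 2) / \<rho>\<rceil> + 1"
  have N: "N > 0" "k \<le> N" unfolding N_def by auto
  have Nbig: "real (q ^ (N - 1)) * \<rho> > real q * D + 2"
  proof -
    have "(real q * D + 2) / \<rho> \<le> real (nat \<lceil>(real q * D + 2) / \<rho>\<rceil>)" by linarith
    also have "\<dots> \<le> real (N - 1)" unfolding N_def by simp
    also have "real (N - 1) < real (2 ^ (N - 1))" by (simp add: less_exp)
    also have "real ((2::nat) ^ (N - 1)) \<le> real (q ^ (N - 1))"
      using q2 by (simp add: power_mono)
    finally have "(real q * D + 2) / \<rho> < real (q ^ (N - 1))" .
    then show ?thesis using rho by (simp add: divide_less_eq)
  qed
  define L where "L = N * q ^ N"
  have L0: "L > 0" unfolding L_def using N q0 by simp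
  define s0 where "s0 = real (q ^ (N - 1))"
  have s0: "s0 > 0" unfolding s0_def using q0 by simp
  define H where "H = (1 / real L) *\<^sub>R (\<Sum>t<L. real t *\<^sub>R g (W q N t))"
  define Gf where "Gf j l = (1 / qs l L) *\<^sub>R (\<Sum>r<L. qs l r *\<^sub>R g (Xb q N j r))" for j l
  have G1: "Gf j 1 = H + s0 *\<^sub>R V j" if "j < q" for j
  proof -
    have "Gf j 1 = (1 / real L) *\<^sub>R (\<Sum>r<L. real r *\<^sub>R g (Xb q N j r))"
      unfolding Gf_def by (rule G_one)
    also have "(\<Sum>r<L. real r *\<^sub>R g (Xb q N j r)) = (\<Sum>t<L. real t *\<^sub>R g (W q N t)) + real L *\<^sub>R (s0 *\<^sub>R V j)"
      unfolding L_def s0_def V_def by (rule Xb_weighted[OF q0 N(1) that g0q])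
    finally show ?thesis using L0 unfolding H_def by (simp add: scaleR_add_right)
  qed
  define F where "F l = (\<Sum>j<q. norm (Gf j l - Gf j 1))" for l
  have Fc: "isCont F 1"
  proof -
    have "isCont (\<lambda>l. Gf j l) 1" for j unfolding Gf_def by (rule G_cont[OF L0])
    then show ?thesis unfolding F_def by (intro continuous_intros) auto
  qed
  have F1: "F 1 = 0" unfolding F_def by simp
  obtain \<delta>c where dc: "\<delta>c > 0" "\<forall>l. dist l 1 < \<delta>c \<longrightarrow> dist (F l) (F 1) < 1 / 2"
    using Fc[unfolded continuous_at_eps_delta] by (meson half_gt_zero zero_less_one)
  define \<delta> where "\<delta> = min \<delta>c (1 / (real q * real L))"
  have \<delta>: "\<delta> > 0" unfolding \<delta>_def using dc q0 L0 by simp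
  show ?thesis
  proof (intro exI[of _ \<delta>] conjI allI impI \<delta>)
    fix lam assume lam: "0 < lam \<and> 1 - \<delta> < lam \<and> lam < 1"
    then have l0: "0 < lam" and l1: "lam < 1" and ld: "1 - lam < \<delta>" by auto
    define \<epsilon> where "\<epsilon> = 1 - lam"
    have e0: "\<epsilon> > 0" unfolding \<epsilon>_def using l1 by simp
    have eqL: "\<epsilon> * (real q * real L) \<le> 1"
    proof -
      have "\<epsilon> \<le> 1 / (real q * real L)" using ld unfolding \<epsilon>_def \<delta>_def by simp
      then show ?thesis using q0 L0 by (simp add: field_simps)
    qed
    have eq1: "\<epsilon> \<le> 1 / real q"
    proof -
      have "\<epsilon> * real q \<le> \<epsilon> * (real q * real L)" using e0 q0 L0 by (simp add: mult_left_mono)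
      then have "\<epsilon> * real q \<le> 1" using eqL by linarith
      then show ?thesis using q0 by (simp add: field_simps)
    qed
    have att: "attractor lam p n = convex hull (p ` {0..n})"
      by (rule attractor_eq) (use l0 l1 eq1 in \<open>auto simp: \<epsilon>_def q_def\<close>)
    have LamB: "1 - lam ^ L \<le> 1 / real q"
    proof -
      have "1 + real L * (- \<epsilon>) \<le> (1 + (- \<epsilon>)) ^ L" by (rule Bernoulli_inequality) (use l0 in \<open>simp add: \<epsilon>_def\<close>)
      then have "1 - lam ^ L \<le> real L * \<epsilon>" unfolding \<epsilon>_def by (simp add: algebra_simps)
      also have "\<dots> \<le> 1 / real q" using eqL q0 by (simp add: field_simps)
      finally show ?thesis .
    qed
    have Fsmall: "norm (Gf j lam - Gf j 1) < 1 / 2" if "j < q" for j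
    proof -
      have "dist lam 1 < \<delta>c" using ld l1 unfolding \<delta>_def dist_real_def by simp
      then have "dist (F lam) (F 1) < 1 / 2" using dc by blast
      then have "\<bar>F lam\<bar> < 1 / 2" using F1 by (simp add: dist_real_def)
      then have "F lam < 1 / 2" by simp
      moreover have "norm (Gf j lam - Gf j 1) \<le> F lam"
        unfolding F_def by (rule member_le_sum) (use that in auto)
      ultimately show ?thesis by simp
    qed
    define C where "C j = (1 / qs lam L) *\<^sub>R (\<Sum>r<L. lam ^ r *\<^sub>R p (Xb q N j r))" for j
    have CG: "C j = pb - \<epsilon> *\<^sub>R Gf j lam" if "j < q" for j
    proof -
      have "(\<Sum>r<L. g (Xb q N j r)) = 0" using Xb_sum[OF q0 N(1) that, of g] g0q unfolding L_def by simp
      then show ?thesis unfolding C_def Gf_def \<epsilon>_def using C_eq[OF L0 l0, of g p pb] g_def by simp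
    qed
    have hullC: "y \<in> convex hull (C ` {..<q})"
      if y: "norm (y - (\<Sum>j<q. \<gamma> j *\<^sub>R C j)) \<le> real q * \<epsilon> * D" for y
    proof -
      define y' where "y' = (1 / \<epsilon>) *\<^sub>R (pb - y)"
      have sumC: "(\<Sum>j<q. \<gamma> j *\<^sub>R C j) = pb - \<epsilon> *\<^sub>R (\<Sum>j<q. \<gamma> j *\<^sub>R Gf j lam)"
      proof -
        have "(\<Sum>j<q. \<gamma> j *\<^sub>R C j) = (\<Sum>j<q. \<gamma> j *\<^sub>R pb - \<epsilon> *\<^sub>R (\<gamma> j *\<^sub>R Gf j lam))"
          by (intro sum.cong refl) (simp add: CG scaleR_diff_right)
        also have "\<dots> = (\<Sum>j<q. \<gamma> j) *\<^sub>R pb - \<epsilon> *\<^sub>R (\<Sum>j<q. \<gamma> j *\<^sub>R Gf j lam)"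
          by (simp add: sum_subtractf scaleR_sum_left scaleR_sum_right)
        finally show ?thesis using gam(2) by simp
      qed
      have y'1: "norm (y' - (\<Sum>j<q. \<gamma> j *\<^sub>R Gf j lam)) \<le> real q * D"
      proof -
        have "y' - (\<Sum>j<q. \<gamma> j *\<^sub>R Gf j lam) = (1 / \<epsilon>) *\<^sub>R ((\<Sum>j<q. \<gamma> j *\<^sub>R C j) - y)"
          unfolding y'_def sumC using e0 by (simp add: algebra_simps)
        then have "norm (y' - (\<Sum>j<q. \<gamma> j *\<^sub>R Gf j lam)) = (1 / \<epsilon>) * norm (y - (\<Sum>j<q. \<gamma> j *\<^sub>R C j))"
          using e0 by (simp add: norm_minus_commute)
        also have "\<dots> \<le> (1 / \<epsilon>) * (real q * \<epsilon> * D)" using y e0 by (intro mult_left_mono) auto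
        also have "\<dots> = real q * D" using e0 by simp
        finally show ?thesis .
      qed
      have y'2: "norm ((\<Sum>j<q. \<gamma> j *\<^sub>R Gf j lam) - (H + s0 *\<^sub>R y0)) \<le> 1 / 2"
      proof -
        have "(\<Sum>j<q. \<gamma> j *\<^sub>R Gf j lam) - (H + s0 *\<^sub>R y0) = (\<Sum>j<q. \<gamma> j *\<^sub>R (Gf j lam - Gf j 1))"
        proof -
          have "(\<Sum>j<q. \<gamma> j *\<^sub>R (Gf j lam - Gf j 1)) = (\<Sum>j<q. \<gamma> j *\<^sub>R Gf j lam - (\<gamma> j *\<^sub>R H + s0 *\<^sub>R (\<gamma> j *\<^sub>R V j)))"
            by (intro sum.cong refl) (simp add: G1 scaleR_diff_right scaleR_add_right)
          also have "\<dots> = (\<Sum>j<q. \<gamma> j *\<^sub>R Gf j lam) - ((\<Sum>j<q. \<gamma> j) *\<^sub>R H + s0 *\<^sub>R (\<Sum>j<q. \<gamma> j *\<^sub>R V j))"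
            by (simp add: sum_subtractf sum.distrib scaleR_sum_left scaleR_sum_right)
          finally show ?thesis using gam by simp
        qed
        then have "norm ((\<Sum>j<q. \<gamma> j *\<^sub>R Gf j lam) - (H + s0 *\<^sub>R y0)) \<le> (\<Sum>j<q. norm (\<gamma> j *\<^sub>R (Gf j lam - Gf j 1)))"
          by (simp only: norm_sum)
        also have "\<dots> \<le> (\<Sum>j<q. \<gamma> j * (1 / 2))"
        proof (intro sum_mono)
          fix j assume j: "j \<in> {..<q}"
          have "norm (\<gamma> j *\<^sub>R (Gf j lam - Gf j 1)) = \<gamma> j * norm (Gf j lam - Gf j 1)" using gam j by simp
          also have "\<dots> \<le> \<gamma> j * (1 / 2)" using Fsmall[of j] gam j by (intro mult_left_mono) auto
          finally show "norm (\<gamma> j *\<^sub>R (Gf j lam - Gf j 1)) \<le> \<gamma> j * (1 / 2)" .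
        qed
        also have "\<dots> = (\<Sum>j<q. \<gamma> j) * (1 / 2)" by (rule sum_distrib_right[symmetric])
        also have "\<dots> = 1 / 2" using gam by simp
        finally show ?thesis .
      qed
      have "y' \<in> convex hull ((\<lambda>j. Gf j lam) ` {..<q})"
      proof (rule hull_perturb[OF finite_lessThan s0 rho(1) _ rho(2)])
        show "0 \<le> (1 / 2 :: real)" by simp
        show "\<forall>j\<in>{..<q}. norm (Gf j lam - (H + s0 *\<^sub>R V j)) \<le> 1 / 2"
          using Fsmall G1 by (auto intro: less_imp_le)
        have "norm (y' - (H + s0 *\<^sub>R y0)) \<le> norm (y' - (\<Sum>j<q. \<gamma> j *\<^sub>R Gf j lam)) + norm ((\<Sum>j<q. \<gamma> j *\<^sub>R Gf j lam) - (H + s0 *\<^sub>R y0))"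
        proof -
          have e: "y' - (H + s0 *\<^sub>R y0) = (y' - (\<Sum>j<q. \<gamma> j *\<^sub>R Gf j lam)) + ((\<Sum>j<q. \<gamma> j *\<^sub>R Gf j lam) - (H + s0 *\<^sub>R y0))"
            by simp
          show ?thesis unfolding e by (rule norm_triangle_ineq)
        qed
        also have "\<dots> \<le> real q * D + 1 / 2" using y'1 y'2 by simp
        also have "\<dots> < s0 * \<rho> - 1 / 2" using Nbig unfolding s0_def by simp
        finally show "norm (y' - (H + s0 *\<^sub>R y0)) < s0 * \<rho> - 1 / 2" .
      qed
      then obtain \<beta> where b: "\<forall>j\<in>{..<q}. 0 \<le> \<beta> j" "sum \<beta> {..<q} = 1" "y' = (\<Sum>j\<in>{..<q}. \<beta> j *\<^sub>R Gf j lam)"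
        by (rule convex_hull_indexedE[OF finite_lessThan])
      have "y = pb - \<epsilon> *\<^sub>R y'" unfolding y'_def using e0 by simp
      also have "\<dots> = (\<Sum>j\<in>{..<q}. \<beta> j *\<^sub>R C j)"
      proof -
        have "(\<Sum>j\<in>{..<q}. \<beta> j *\<^sub>R C j) = (\<Sum>j\<in>{..<q}. \<beta> j *\<^sub>R pb - \<epsilon> *\<^sub>R (\<beta> j *\<^sub>R Gf j lam))"
          by (intro sum.cong refl) (simp add: CG scaleR_diff_right)
        also have "\<dots> = (\<Sum>j\<in>{..<q}. \<beta> j) *\<^sub>R pb - \<epsilon> *\<^sub>R (\<Sum>j\<in>{..<q}. \<beta> j *\<^sub>R Gf j lam)"
          by (simp add: sum_subtractf scaleR_sum_left scaleR_sum_right)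
        finally show ?thesis using b by simp
      qed
      also have "\<dots> \<in> convex hull (C ` {..<q})" using b by (intro convex_hull_indexedI) auto
      finally show ?thesis .
    qed
    show "normal_points lam p n k = interior (attractor lam p n)"
    proof
      show "normal_points lam p n k \<subseteq> interior (attractor lam p n)"
      proof
        fix x assume "x \<in> normal_points lam p n k"
        then obtain a where a: "\<forall>j. a j \<in> {0..n}" "coding_map lam p a = x" "simply_normal n k a"
          unfolding normal_points_def by blast
        show "x \<in> interior (attractor lam p n)"
          using normal_in_interior[OF aff l0 l1 a(1) a(3) assms(3)] a(2) att by simp
      qed
      show "interior (attractor lam p n) \<subseteq> normal_points lam p n k"
      proof
        fix x assume x: "x \<in> interior (attractor lam p n)"
        then have xi: "x \<in> interior (convex hull (p ` {0..n}))" using att by simp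
        have "\<exists>a. (\<forall>j. a j \<in> {0..n}) \<and> coding_map lam p a = x \<and> simply_normal n k a"
        proof (rule main_construction[OF N(1) N(2) assms(3) l0 l1 _ _ _ _ _ xi])
          show "1 - lam ^ (N * Suc n ^ N) \<le> 1 / real (Suc n)" using LamB unfolding L_def q_def .
          show "\<forall>j<Suc n. 0 \<le> \<gamma> j" using gam unfolding q_def by auto
          show "(\<Sum>j<Suc n. \<gamma> j) = 1" using gam unfolding q_def by auto
          show "D = 2 * (\<Sum>i\<in>{0..n}. norm (p i))" unfolding D_def Mp_def ..
          fix y
          assume "norm (y - (\<Sum>j<Suc n. \<gamma> j *\<^sub>R ((1 / qs lam (N * Suc n ^ N)) *\<^sub>R
                   (\<Sum>r<N * Suc n ^ N. lam ^ r *\<^sub>R p (Xb (Suc n) N j r)))))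
             \<le> real (Suc n) * (1 - lam) * D"
          then have "norm (y - (\<Sum>j<q. \<gamma> j *\<^sub>R C j)) \<le> real q * \<epsilon> * D"
            unfolding C_def L_def q_def \<epsilon>_def .
          then have "y \<in> convex hull (C ` {..<q})" by (rule hullC)
          then show "y \<in> convex hull ((\<lambda>j. (1 / qs lam (N * Suc n ^ N)) *\<^sub>R
                   (\<Sum>r<N * Suc n ^ N. lam ^ r *\<^sub>R p (Xb (Suc n) N j r))) ` {..<Suc n})"
            unfolding C_def L_def q_def .
        qed
        moreover have "x \<in> attractor lam p n" using x interior_subset by blast
        ultimately show "x \<in> normal_points lam p n k" unfolding normal_points_def by blast
      qed
    qed
  qed
qed


end
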